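(* Under the setting of the Jitomirskaya–Last inequality, for every $\xi\in\partial\mathbb D$, $\lambda\in\mathbb R$ and $\epsilon>0$, $$\left|\frac{1+\xi s(\lambda+i\epsilon)}{1-\xi s(\lambda+i\epsilon)}\right|\le c_+\sup_{0\le x\le\frac1{2\epsilon}}\|T(\lambda,x)\|^2,\qquad c_+=3+\sqrt8.$$
   Context: $\varphi\in L^1_{\rm loc}([0,\infty))$ with $\sup_{x\ge0}\int_x^{x+1}|\varphi|<\infty$; $\Lambda_\varphi=\begin{bmatrix} i&0\\0&-i\end{bmatrix}\frac{d}{dx}+\begin{bmatrix}0&\varphi\\ \overline{\varphi}&0\end{bmatrix}$ on $[0,\infty)$. For $\Im z>0$, $\Psi(z,\cdot)$ is the solution of $\Lambda_\varphi\Psi=z\Psi$ in $L^2([0,\infty),\mathbb C^2)$ normalized by $\Psi(z,0)=(s(z),1)^\top$, defining the Schur function $s$. $T(\lambda,x)$ solves $\Lambda_\varphi T=\lambda T$, $T(\lambda,0)=I$. *)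

theory Defs
  imports "HOL-Analysis.Analysis"
begin

text \<open>Coefficient matrix of the first-order system equivalent to
  Lambda_phi u = z u, i.e. u' = A u with
  u1' = -i z u1 + i phi u2,  u2' = -i conj(phi) u1 + i z u2.\<close>
definition dirac_coeff :: "(real \<Rightarrow> complex) \<Rightarrow> complex \<Rightarrow> real \<Rightarrow> complex^2^2" where
  "dirac_coeff \<phi> z t = (\<chi> i j.
      if i = 1 then (if j = 1 then - \<i> * z else \<i> * \<phi> t)
      else (if j = 1 then - \<i> * cnj (\<phi> t) else \<i> * z))"

text \<open>Absolutely continuous (integral-equation) solutions on [0,oo) of Lambda_phi u = z u.\<close>
definition dirac_sol :: "(real \<Rightarrow> complex) \<Rightarrow> complex \<Rightarrow> (real \<Rightarrow> complex^2) \<Rightarrow> bool" where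
  "dirac_sol \<phi> z u \<longleftrightarrow>
     (\<forall>x\<ge>0. (\<lambda>t. dirac_coeff \<phi> z t *v u t) integrable_on {0..x} \<and>
             u x = u 0 + integral {0..x} (\<lambda>t. dirac_coeff \<phi> z t *v u t))"

definition dirac_msol :: "(real \<Rightarrow> complex) \<Rightarrow> complex \<Rightarrow> (real \<Rightarrow> complex^2^2) \<Rightarrow> bool" where
  "dirac_msol \<phi> z M \<longleftrightarrow>
     (\<forall>x\<ge>0. (\<lambda>t. dirac_coeff \<phi> z t ** M t) integrable_on {0..x} \<and>
             M x = M 0 + integral {0..x} (\<lambda>t. dirac_coeff \<phi> z t ** M t))"

definition transfer :: "(real \<Rightarrow> complex) \<Rightarrow> real \<Rightarrow> real \<Rightarrow> complex^2^2" where
  "transfer \<phi> lam x = (THE N. \<exists>M. dirac_msol \<phi> (complex_of_real lam) M \<and> M 0 = mat 1 \<and> M x = N)"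

definition schur :: "(real \<Rightarrow> complex) \<Rightarrow> complex \<Rightarrow> complex" where
  "schur \<phi> z = (THE w. \<exists>\<Psi>. dirac_sol \<phi> z \<Psi> \<and>
        (\<lambda>x. (norm (\<Psi> x))\<^sup>2) integrable_on {0..} \<and>
        \<Psi> 0 = (\<chi> i. if i = 1 then w else 1))"

end

theory Submission
  imports Defs
begin

lemma incr_sq_const:
  fixes h :: "real \<Rightarrow> 'b::real_normed_vector" and F :: "real \<Rightarrow> real"
  assumes X: "0 \<le> X" and Fc: "continuous_on {0..X} F" and C: "0 \<le> C"
    and Fm: "\<And>x y. 0 \<le> x \<Longrightarrow> x \<le> y \<Longrightarrow> y \<le> X \<Longrightarrow> F x \<le> F y"
    and hb: "\<And>x y. 0 \<le> x \<Longrightarrow> x \<le> y \<Longrightarrow> y \<le> X \<Longrightarrow> norm (h y - h x) \<le> C * (F y - F x)^2"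
  shows "h X = h 0"
proof -
  have main: "norm (h X - h 0) \<le> C * e * (F X - F 0)" if e: "e > 0" for e
  proof -
    have "uniformly_continuous_on {0..X} F"
      using compact_uniformly_continuous[OF Fc] by simp
    then obtain d where d: "d > 0" and dd: "\<And>x x'. x \<in> {0..X} \<Longrightarrow> x' \<in> {0..X} \<Longrightarrow> dist x' x < d \<Longrightarrow> dist (F x') (F x) < e"
      unfolding uniformly_continuous_on_def using e by metis
    obtain n :: nat where n: "X / d < real n" using reals_Archimedean2 by blast
    have "0 \<le> X / d" using X d by simp
    then have npos: "n > 0" using n by (cases "n = 0") auto
    define p where "p k = X * real k / real n" for k
    have step: "X / real n < d" using n npos d by (simp add: field_simps)
    have "k \<le> n \<Longrightarrow> norm (h (p k) - h 0) \<le> C * e * (F (p k) - F 0)" for k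
    proof (induction k)
      case 0 then show ?case by (simp add: p_def)
    next
      case (Suc k)
      have r: "real (Suc k) \<le> real n" using Suc.prems by simp
      have "X * real (Suc k) \<le> X * real n" using mult_left_mono[OF r X] .
      then have pk3: "p (Suc k) \<le> X" using npos by (simp add: p_def pos_divide_le_eq)
      have pk: "0 \<le> p k" "p k \<le> p (Suc k)" "p (Suc k) \<le> X"
        using X npos pk3 by (auto simp: p_def divide_right_mono mult_left_mono)
      have dpk: "p (Suc k) - p k = X / real n" by (simp add: p_def algebra_simps add_divide_distrib)
      have "dist (F (p (Suc k))) (F (p k)) < e"
        using dd[of "p k" "p (Suc k)"] pk dpk step X by (auto simp: dist_real_def)
      then have d1: "F (p (Suc k)) - F (p k) < e" and d0: "0 \<le> F (p (Suc k)) - F (p k)"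
        using Fm[of "p k" "p (Suc k)"] pk by (auto simp: dist_real_def)
      have "(F (p (Suc k)) - F (p k))^2 \<le> e * (F (p (Suc k)) - F (p k))"
        using d1 d0 by (simp add: power2_eq_square mult_right_mono)
      then have a: "norm (h (p (Suc k)) - h (p k)) \<le> C * e * (F (p (Suc k)) - F (p k))"
        using hb[OF pk] C by (smt (verit) mult.assoc mult_left_mono)
      have "norm (h (p (Suc k)) - h 0) \<le> norm (h (p (Suc k)) - h (p k)) + norm (h (p k) - h 0)"
        by (metis diff_add_cancel norm_triangle_ineq add_diff_eq)
      also have "\<dots> \<le> C * e * (F (p (Suc k)) - F (p k)) + C * e * (F (p k) - F 0)"
        using a Suc by simp
      finally show ?case by (simp add: algebra_simps)
    qed
    from this[of n] show ?thesis using npos by (simp add: p_def)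
  qed
  have FX: "F 0 \<le> F X" using Fm[of 0 X] X by simp
  have "norm (h X - h 0) \<le> e" if "e > 0" for e
  proof -
    define e' where "e' = e / (C * (F X - F 0) + 1)"
    have pos: "C * (F X - F 0) + 1 > 0" using C FX by (smt (verit) mult_nonneg_nonneg)
    have "e' > 0" using that pos by (simp add: e'_def)
    from main[OF this] have "norm (h X - h 0) \<le> e' * (C * (F X - F 0))" by (simp add: algebra_simps)
    also have "\<dots> \<le> e' * (C * (F X - F 0) + 1)" using \<open>e' > 0\<close> by simp
    also have "\<dots> = e" using pos by (simp add: e'_def)
    finally show ?thesis .
  qed
  then have "norm (h X - h 0) \<le> 0" by (meson dense not_le)
  then show ?thesis by simp
qed

lemma ai_int: "f absolutely_integrable_on S \<Longrightarrow> f integrable_on S"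
  for f :: "real \<Rightarrow> 'a::euclidean_space"
  by (simp add: absolutely_integrable_on_def)

lemma ai_norm_int: "f absolutely_integrable_on S \<Longrightarrow> (\<lambda>x. norm (f x)) integrable_on S"
  for f :: "real \<Rightarrow> 'a::euclidean_space"
  by (simp add: absolutely_integrable_on_def)

lemma ai_sub: "f absolutely_integrable_on {a..b} \<Longrightarrow> a \<le> c \<Longrightarrow> d \<le> b \<Longrightarrow> f absolutely_integrable_on {c..d}"
  for f :: "real \<Rightarrow> 'a::euclidean_space"
  by (rule absolutely_integrable_on_subinterval) auto

lemma ai_cont_mult:
  fixes a g :: "real \<Rightarrow> 'a::{real_normed_field, euclidean_space}"
  assumes "a absolutely_integrable_on {c..d}" "continuous_on {c..d} g"
  shows "(\<lambda>t. g t * a t) absolutely_integrable_on {c..d}"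
    "(\<lambda>t. a t * g t) absolutely_integrable_on {c..d}"
proof -
  have b: "bounded (g ` {c..d})"
    using assms(2) by (simp add: compact_continuous_image compact_imp_bounded)
  show 1: "(\<lambda>t. g t * a t) absolutely_integrable_on {c..d}"
    by (rule absolutely_integrable_bounded_measurable_product[OF bilinear_times
          continuous_imp_measurable_on_sets_lebesgue[OF assms(2)] _ b assms(1)]) auto
  show "(\<lambda>t. a t * g t) absolutely_integrable_on {c..d}"
    using 1 by (simp add: mult.commute)
qed

lemma indef_cont:
  fixes a :: "real \<Rightarrow> 'a::banach"
  assumes "a integrable_on {0..X}" "\<And>x. x \<in> {0..X} \<Longrightarrow> f x = f0 + integral {0..x} a"
  shows "continuous_on {0..X} f"
proof -
  have "continuous_on {0..X} (\<lambda>x. f0 + integral {0..x} a)"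
    by (intro continuous_intros indefinite_integral_continuous_1 assms(1))
  then show ?thesis by (rule continuous_on_eq) (simp add: assms(2))
qed

lemma indef_diff:
  fixes a :: "real \<Rightarrow> 'a::banach"
  assumes "a integrable_on {0..X}" "0 \<le> x" "x \<le> y" "y \<le> X"
  shows "integral {0..y} a - integral {0..x} a = integral {x..y} a"
proof -
  have "a integrable_on {0..y}" using assms by (auto intro: integrable_on_subinterval)
  from Henstock_Kurzweil_Integration.integral_combine[OF assms(2,3) this] show ?thesis by (simp add: algebra_simps)
qed

lemma prod_rule:
  fixes a b f g :: "real \<Rightarrow> 'a::{real_normed_field, euclidean_space}"
  assumes X: "0 \<le> X" and ai: "a absolutely_integrable_on {0..X}" and bi: "b absolutely_integrable_on {0..X}"
   and f: "\<And>x. x \<in> {0..X} \<Longrightarrow> f x = f0 + integral {0..x} a"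
   and g: "\<And>x. x \<in> {0..X} \<Longrightarrow> g x = g0 + integral {0..x} b"
  shows "(\<lambda>t. a t * g t + f t * b t) absolutely_integrable_on {0..X}"
    "f X * g X = f0 * g0 + integral {0..X} (\<lambda>t. a t * g t + f t * b t)"
proof -
  have aI: "a integrable_on {0..X}" and bI: "b integrable_on {0..X}" using ai bi by (auto intro: ai_int)
  have fc: "continuous_on {0..X} f" by (rule indef_cont[OF aI f])
  have gc: "continuous_on {0..X} g" by (rule indef_cont[OF bI g])
  have ag: "(\<lambda>t. a t * g t) absolutely_integrable_on {0..X}" using ai_cont_mult[OF ai gc] by simp
  have fb: "(\<lambda>t. f t * b t) absolutely_integrable_on {0..X}" using ai_cont_mult[OF bi fc] by simp
  show S: "(\<lambda>t. a t * g t + f t * b t) absolutely_integrable_on {0..X}"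
    using ag fb by (rule set_integral_add)
  define S where "S t = a t * g t + f t * b t" for t
  have SI: "S integrable_on {0..X}" using ai_int[OF S] by (simp add: S_def[abs_def])
  define N where "N t = norm (a t) + norm (b t)" for t
  have NI: "N integrable_on {0..X}" unfolding N_def[abs_def]
    by (intro integrable_add ai_norm_int ai bi)
  define F where "F x = integral {0..x} N" for x
  define h where "h x = f x * g x - integral {0..x} S" for x
  have hmain: "norm (h y - h x) \<le> 3 * (F y - F x)^2" if xy: "0 \<le> x" "x \<le> y" "y \<le> X" for x y
  proof -
    have xX: "x \<in> {0..X}" "y \<in> {0..X}" using xy by auto
    have aI': "a integrable_on {x..y}" using aI xy by (auto intro: integrable_on_subinterval)
    have bI': "b integrable_on {x..y}" using bI xy by (auto intro: integrable_on_subinterval)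
    have naI: "(\<lambda>t. norm (a t)) integrable_on {x..y}" using ai_norm_int[OF ai_sub[OF ai]] xy by auto
    have nbI: "(\<lambda>t. norm (b t)) integrable_on {x..y}" using ai_norm_int[OF ai_sub[OF bi]] xy by auto
    define \<alpha> where "\<alpha> = integral {x..y} a"
    define \<beta> where "\<beta> = integral {x..y} b"
    define A where "A = integral {x..y} (\<lambda>t. norm (a t))"
    define B where "B = integral {x..y} (\<lambda>t. norm (b t))"
    have fy: "f y = f x + \<alpha>" using f[OF xX(1)] f[OF xX(2)] indef_diff[OF aI xy] by (simp add: \<alpha>_def algebra_simps)
    have gy: "g y = g x + \<beta>" using g[OF xX(1)] g[OF xX(2)] indef_diff[OF bI xy] by (simp add: \<beta>_def algebra_simps)
    have FyFx: "F y - F x = A + B"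
      using indef_diff[OF NI xy] by (simp add: F_def A_def B_def N_def[abs_def] integral_add naI nbI)
    have A0: "0 \<le> A" unfolding A_def by (rule integral_nonneg[OF naI]) auto
    have B0: "0 \<le> B" unfolding B_def by (rule integral_nonneg[OF nbI]) auto
    have na: "norm \<alpha> \<le> A" unfolding \<alpha>_def A_def by (rule integral_norm_bound_integral[OF aI' naI]) auto
    have nb: "norm \<beta> \<le> B" unfolding \<beta>_def B_def by (rule integral_norm_bound_integral[OF bI' nbI]) auto
    have gdiff: "norm (g t - g x) \<le> B" if t: "t \<in> {x..y}" for t
    proof -
      have tX: "t \<in> {0..X}" using t xy by auto
      have "g t - g x = integral {x..t} b" using g[OF xX(1)] g[OF tX] indef_diff[OF bI, of x t] t xy by auto
      also have "norm \<dots> \<le> integral {x..t} (\<lambda>t. norm (b t))"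
        using t by (intro integral_norm_bound_integral) (auto intro: integrable_on_subinterval[OF bI'] integrable_on_subinterval[OF nbI])
      also have "\<dots> \<le> B" unfolding B_def
        using t by (intro integral_subset_le nbI) (auto intro: integrable_on_subinterval[OF nbI])
      finally show ?thesis .
    qed
    have fdiff: "norm (f t - f x) \<le> A" if t: "t \<in> {x..y}" for t
    proof -
      have tX: "t \<in> {0..X}" using t xy by auto
      have "f t - f x = integral {x..t} a" using f[OF xX(1)] f[OF tX] indef_diff[OF aI, of x t] t xy by auto
      also have "norm \<dots> \<le> integral {x..t} (\<lambda>t. norm (a t))"
        using t by (intro integral_norm_bound_integral) (auto intro: integrable_on_subinterval[OF aI'] integrable_on_subinterval[OF naI])
      also have "\<dots> \<le> A" unfolding A_def
        using t by (intro integral_subset_le naI) (auto intro: integrable_on_subinterval[OF naI])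
      finally show ?thesis .
    qed
    have fcxy: "continuous_on {x..y} f" using xy by (intro continuous_on_subset[OF fc]) auto
    have gcxy: "continuous_on {x..y} g" using xy by (intro continuous_on_subset[OF gc]) auto
    have ai': "a absolutely_integrable_on {x..y}" using ai_sub[OF ai] xy by auto
    have bi': "b absolutely_integrable_on {x..y}" using ai_sub[OF bi] xy by auto
    have e1I: "(\<lambda>t. a t * (g t - g x)) integrable_on {x..y}"
      by (intro ai_int ai_cont_mult(2)[OF ai'] continuous_intros gcxy)
    have e2I: "(\<lambda>t. (f t - f x) * b t) integrable_on {x..y}"
      by (intro ai_int ai_cont_mult(1)[OF bi'] continuous_intros fcxy)
    define E1 where "E1 = integral {x..y} (\<lambda>t. a t * (g t - g x))"
    define E2 where "E2 = integral {x..y} (\<lambda>t. (f t - f x) * b t)"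
    have nE1: "norm E1 \<le> A * B"
    proof -
      have "norm E1 \<le> integral {x..y} (\<lambda>t. norm (a t) * B)" unfolding E1_def
        using gdiff by (intro integral_norm_bound_integral e1I integrable_on_mult_left naI)
          (auto simp: norm_mult intro: mult_left_mono)
      also have "\<dots> = A * B" by (simp add: A_def)
      finally show ?thesis .
    qed
    have nE2: "norm E2 \<le> A * B"
    proof -
      have "norm E2 \<le> integral {x..y} (\<lambda>t. A * norm (b t))" unfolding E2_def
        using fdiff by (intro integral_norm_bound_integral e2I integrable_on_mult_right nbI)
          (auto simp: norm_mult intro: mult_right_mono)
      also have "\<dots> = A * B" by (simp add: B_def)
      finally show ?thesis .
    qed
    have agI: "(\<lambda>t. a t * g t) integrable_on {x..y}" using ai_int[OF ai_cont_mult(2)[OF ai' gcxy]] .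
    have fbI: "(\<lambda>t. f t * b t) integrable_on {x..y}" using ai_int[OF ai_cont_mult(1)[OF bi' fcxy]] .
    have i1: "integral {x..y} (\<lambda>t. a t * g t) = E1 + \<alpha> * g x"
    proof -
      have "integral {x..y} (\<lambda>t. a t * g t) = integral {x..y} (\<lambda>t. a t * (g t - g x) + a t * g x)"
        by (simp add: algebra_simps)
      also have "\<dots> = E1 + \<alpha> * g x" unfolding E1_def \<alpha>_def
        by (subst integral_add[OF e1I integrable_on_mult_left[OF aI']]) simp
      finally show ?thesis .
    qed
    have i2: "integral {x..y} (\<lambda>t. f t * b t) = E2 + f x * \<beta>"
    proof -
      have "integral {x..y} (\<lambda>t. f t * b t) = integral {x..y} (\<lambda>t. (f t - f x) * b t + f x * b t)"
        by (simp add: algebra_simps)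
      also have "\<dots> = E2 + f x * \<beta>" unfolding E2_def \<beta>_def
        by (subst integral_add[OF e2I integrable_on_mult_right[OF bI']]) simp
      finally show ?thesis .
    qed
    have iS: "integral {0..y} S - integral {0..x} S = E1 + \<alpha> * g x + E2 + f x * \<beta>"
      using indef_diff[OF SI xy] i1 i2 agI fbI by (simp add: S_def[abs_def] integral_add)
    have "h y - h x = \<alpha> * \<beta> - E1 - E2"
      unfolding h_def using iS fy gy by (simp add: algebra_simps)
    then have "norm (h y - h x) \<le> norm (\<alpha> * \<beta> - E1) + norm E2"
      by (simp add: norm_triangle_ineq4)
    also have "\<dots> \<le> norm (\<alpha> * \<beta>) + norm E1 + norm E2"
      using norm_triangle_ineq4[of "\<alpha> * \<beta>" E1] by simp
    finally have "norm (h y - h x) \<le> norm \<alpha> * norm \<beta> + norm E1 + norm E2"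
      by (simp add: norm_mult)
    also have "\<dots> \<le> A * B + A * B + A * B"
      using na nb nE1 nE2 A0 by (intro add_mono mult_mono) auto
    also have "\<dots> \<le> 3 * (F y - F x)^2" unfolding FyFx using A0 B0
      by (simp add: power2_eq_square algebra_simps)
    finally show ?thesis .
  qed
  have Fc: "continuous_on {0..X} F" unfolding F_def by (rule indefinite_integral_continuous_1[OF NI])
  have Fm: "F x \<le> F y" if "0 \<le> x" "x \<le> y" "y \<le> X" for x y
    unfolding F_def using that NI
    by (intro integral_subset_le) (auto simp: N_def intro: integrable_on_subinterval)
  have "h X = h 0" by (rule incr_sq_const[OF X Fc _ Fm hmain]) auto
  then show "f X * g X = f0 * g0 + integral {0..X} (\<lambda>t. a t * g t + f t * b t)"
    using f[of 0] g[of 0] X by (simp add: h_def S_def[abs_def] algebra_simps)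
qed

lemma pow_int_aux:
  fixes a :: "real \<Rightarrow> real"
  assumes X: "0 \<le> X" and aI: "a integrable_on {0..X}" and a0: "\<And>t. t \<in> {0..X} \<Longrightarrow> 0 \<le> a t"
  shows "x \<in> {0..X} \<Longrightarrow> (integral {0..x} a) ^ Suc n
           = 0 + integral {0..x} (\<lambda>t. real (Suc n) * (a t * (integral {0..t} a) ^ n))"
proof (induction n arbitrary: x)
  case 0
  then show ?case by simp
next
  case (Suc n)
  define F where "F x = integral {0..x} a" for x
  have x: "0 \<le> x" "x \<le> X" using Suc.prems by auto
  have aIx: "a integrable_on {0..x}" using aI x by (auto intro: integrable_on_subinterval)
  have aix: "a absolutely_integrable_on {0..x}"
    by (rule nonnegative_absolutely_integrable_1[OF aIx]) (use a0 x in auto)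
  have Fc: "continuous_on {0..x} F" unfolding F_def by (rule indefinite_integral_continuous_1[OF aIx])
  have bix: "(\<lambda>t. real (Suc n) * (a t * F t ^ n)) absolutely_integrable_on {0..x}"
  proof -
    have "(\<lambda>t. (real (Suc n) * F t ^ n) * a t) absolutely_integrable_on {0..x}"
      by (intro ai_cont_mult(1)[OF aix] continuous_intros Fc)
    then show ?thesis by (simp add: algebra_simps)
  qed
  have g: "\<And>y. y \<in> {0..x} \<Longrightarrow> F y ^ Suc n = 0 + integral {0..y} (\<lambda>t. real (Suc n) * (a t * F t ^ n))"
    using Suc.IH x unfolding F_def by auto
  have f: "\<And>y. y \<in> {0..x} \<Longrightarrow> F y = 0 + integral {0..y} a" by (simp add: F_def)
  from prod_rule(2)[OF x(1) aix bix f g]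
  have "F x * F x ^ Suc n = integral {0..x} (\<lambda>t. a t * F t ^ Suc n + F t * (real (Suc n) * (a t * F t ^ n)))"
    by simp
  also have "\<dots> = integral {0..x} (\<lambda>t. real (Suc (Suc n)) * (a t * F t ^ Suc n))"
    by (rule integral_cong) (simp add: algebra_simps)
  finally show ?case by (simp add: F_def)
qed

lemma pow_int:
  fixes a :: "real \<Rightarrow> real"
  assumes X: "0 \<le> X" and aI: "a integrable_on {0..X}" and a0: "\<And>t. t \<in> {0..X} \<Longrightarrow> 0 \<le> a t"
    and x: "x \<in> {0..X}"
  shows "(\<lambda>t. a t * (integral {0..t} a) ^ n) integrable_on {0..x}"
    "integral {0..x} (\<lambda>t. a t * (integral {0..t} a) ^ n) = (integral {0..x} a) ^ Suc n / real (Suc n)"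
proof -
  have aIx: "a integrable_on {0..x}" using aI x by (auto intro: integrable_on_subinterval)
  have aix: "a absolutely_integrable_on {0..x}"
    by (rule nonnegative_absolutely_integrable_1[OF aIx]) (use a0 x in auto)
  have Fc: "continuous_on {0..x} (\<lambda>t. integral {0..t} a)" by (rule indefinite_integral_continuous_1[OF aIx])
  show "(\<lambda>t. a t * (integral {0..t} a) ^ n) integrable_on {0..x}"
    by (intro ai_int ai_cont_mult(2)[OF aix] continuous_intros Fc)
  from pow_int_aux[OF X aI a0 x, of n]
  show "integral {0..x} (\<lambda>t. a t * (integral {0..t} a) ^ n) = (integral {0..x} a) ^ Suc n / real (Suc n)"
    by (simp del: of_nat_Suc)
qed

lemma volterra_unique:
  fixes U :: "real \<Rightarrow> 'v::euclidean_space" and a :: "real \<Rightarrow> real"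
  assumes X: "0 \<le> X" and aI: "a integrable_on {0..X}" and a0: "\<And>t. t \<in> {0..X} \<Longrightarrow> 0 \<le> a t"
    and Uc: "continuous_on {0..X} U"
    and Ub: "\<And>x. x \<in> {0..X} \<Longrightarrow> norm (U x) \<le> integral {0..x} (\<lambda>t. a t * norm (U t))"
  shows "\<And>x. x \<in> {0..X} \<Longrightarrow> U x = 0"
proof -
  define F where "F x = integral {0..x} a" for x
  obtain C where C: "\<And>x. x \<in> {0..X} \<Longrightarrow> norm (U x) \<le> C"
    using compact_imp_bounded[OF compact_continuous_image[OF Uc compact_Icc]]
    unfolding bounded_iff by blast
  have ai: "a absolutely_integrable_on {0..X}"
    by (rule nonnegative_absolutely_integrable_1[OF aI]) (use a0 in auto)
  have F0: "0 \<le> F x" if "x \<in> {0..X}" for x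
    unfolding F_def using that a0 by (intro integral_nonneg) (auto intro: integrable_on_subinterval[OF aI])
  have ind: "norm (U x) \<le> C * F x ^ n / fact n" if "x \<in> {0..X}" for n x
    using that
  proof (induction n arbitrary: x)
    case 0 then show ?case using C by simp
  next
    case (Suc n)
    have x: "0 \<le> x" "x \<le> X" using Suc.prems by auto
    have ax: "a absolutely_integrable_on {0..x}" using ai_sub[OF ai] x by auto
    have Ucx: "continuous_on {0..x} U" using x by (intro continuous_on_subset[OF Uc]) auto
    have i1: "(\<lambda>t. a t * norm (U t)) integrable_on {0..x}"
      by (intro ai_int ai_cont_mult(2)[OF ax] continuous_intros Ucx)
    have i2: "(\<lambda>t. a t * F t ^ n) integrable_on {0..x}"
      unfolding F_def using pow_int(1)[OF X aI a0] Suc.prems by blast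
    have "norm (U x) \<le> integral {0..x} (\<lambda>t. a t * norm (U t))" using Ub Suc.prems by blast
    also have "\<dots> \<le> integral {0..x} (\<lambda>t. (C / fact n) * (a t * F t ^ n))"
    proof (rule integral_le[OF i1])
      show "(\<lambda>t. (C / fact n) * (a t * F t ^ n)) integrable_on {0..x}"
        using i2 by (rule integrable_on_mult_right)
      fix t assume t: "t \<in> {0..x}"
      then have tX: "t \<in> {0..X}" using x by auto
      have "a t * norm (U t) \<le> a t * (C * F t ^ n / fact n)"
        using Suc.IH[OF tX] a0[OF tX] by (rule mult_left_mono)
      then show "a t * norm (U t) \<le> (C / fact n) * (a t * F t ^ n)" by (simp add: algebra_simps)
    qed
    also have "\<dots> = (C / fact n) * (F x ^ Suc n / real (Suc n))"
      using pow_int(2)[OF X aI a0 Suc.prems, of n] by (simp add: F_def)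
    also have "\<dots> = C * F x ^ Suc n / fact (Suc n)"
      by (simp add: field_simps)
    finally show ?case .
  qed
  show "U x = 0" if "x \<in> {0..X}" for x
  proof -
    have "(\<lambda>n. C * F x ^ n / fact n) \<longlonglongrightarrow> 0"
    proof -
      have "(\<lambda>n. F x ^ n / fact n) \<longlonglongrightarrow> 0"
        using summable_LIMSEQ_zero[OF summable_exp[of "F x"]] by (simp add: field_simps)
      from tendsto_mult_left[OF this, of C] show ?thesis by (simp add: mult.assoc times_divide_eq_right)
    qed
    then have "norm (U x) \<le> 0"
      by (rule tendsto_lowerbound) (use ind that in \<open>auto\<close>)
    then show ?thesis by simp
  qed
qed

lemma picard:
  fixes B :: "real \<Rightarrow> 'v::euclidean_space \<Rightarrow> 'v" and a :: "real \<Rightarrow> real" and M0 :: 'v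
  assumes lin: "\<And>t. linear (B t)"
    and bnd: "\<And>t v. 0 \<le> t \<Longrightarrow> norm (B t v) \<le> a t * norm v"
    and aI: "\<And>x. 0 \<le> x \<Longrightarrow> a integrable_on {0..x}" and a0: "\<And>t. 0 \<le> t \<Longrightarrow> 0 \<le> a t"
    and clos: "\<And>M x. 0 \<le> x \<Longrightarrow> continuous_on {0..x} M \<Longrightarrow> (\<lambda>t. B t (M t)) integrable_on {0..x}"
  shows "\<exists>M. \<forall>x\<ge>0. (\<lambda>t. B t (M t)) integrable_on {0..x} \<and> M x = M0 + integral {0..x} (\<lambda>t. B t (M t))"
proof -
  define P where "P = rec_nat (\<lambda>x. M0) (\<lambda>n Pn x. M0 + integral {0..x} (\<lambda>t. B t (Pn t)))"
  have P0: "P 0 = (\<lambda>x. M0)" by (simp add: P_def)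
  have PS: "P (Suc n) = (\<lambda>x. M0 + integral {0..x} (\<lambda>t. B t (P n t)))" for n by (simp add: P_def)
  define F where "F x = integral {0..x} a" for x
  have ai: "a absolutely_integrable_on {0..x}" if "0 \<le> x" for x
    by (rule nonnegative_absolutely_integrable_1[OF aI[OF that]]) (use a0 in auto)
  have Fmono: "F t \<le> F x" if "0 \<le> t" "t \<le> x" for t x
    unfolding F_def using that a0 aI[of x]
    by (intro integral_subset_le) (auto intro: integrable_on_subinterval)
  have F0: "0 \<le> F t" if "0 \<le> t" for t
    unfolding F_def using that a0 aI[of t] by (intro integral_nonneg) auto
  have cont: "continuous_on {0..x} (P n)" if "0 \<le> x" for n x
  proof (induction n)
    case 0 then show ?case by (simp add: P0)
  next
    case (Suc n)
    show ?case unfolding PS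
      by (intro continuous_intros indefinite_integral_continuous_1 clos[OF that Suc.IH])
  qed
  have intg: "(\<lambda>t. B t (P n t)) integrable_on {0..x}" if "0 \<le> x" for n x
    by (rule clos[OF that cont[OF that]])
  define D where "D n x = P (Suc n) x - P n x" for n x
  have Dc: "continuous_on {0..x} (D n)" if "0 \<le> x" for n x
    unfolding D_def[abs_def] by (intro continuous_intros cont that)
  have Dbound: "norm (D n x) \<le> norm M0 * (F x ^ Suc n / fact (Suc n))" if "0 \<le> x" for n x
    using that
  proof (induction n arbitrary: x)
    case 0
    have "D 0 x = integral {0..x} (\<lambda>t. B t M0)" by (simp add: D_def PS P0)
    also have "norm \<dots> \<le> integral {0..x} (\<lambda>t. a t * norm M0)"
      using 0 by (intro integral_norm_bound_integral integrable_on_mult_left aI bnd)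
        (auto simp: intg[OF 0, of 0, unfolded P0])
    also have "\<dots> = norm M0 * F x" by (simp add: F_def)
    finally show ?case by simp
  next
    case (Suc n)
    have x: "0 \<le> x" by fact
    have dI: "(\<lambda>t. B t (D n t)) integrable_on {0..x}"
    proof -
      have "(\<lambda>t. B t (P (Suc n) t) - B t (P n t)) integrable_on {0..x}"
        by (intro integrable_diff intg x)
      then show ?thesis by (simp add: D_def linear_diff[OF lin])
    qed
    have "D (Suc n) x = integral {0..x} (\<lambda>t. B t (P (Suc n) t)) - integral {0..x} (\<lambda>t. B t (P n t))"
      by (simp add: D_def PS)
    also have "\<dots> = integral {0..x} (\<lambda>t. B t (D n t))"
      by (simp add: integral_diff[OF intg[OF x] intg[OF x], symmetric] D_def linear_diff[OF lin])
    finally have Deq: "D (Suc n) x = integral {0..x} (\<lambda>t. B t (D n t))" .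
    have i1: "(\<lambda>t. a t * norm (D n t)) integrable_on {0..x}"
      by (intro ai_int ai_cont_mult(2)[OF ai[OF x]] continuous_intros Dc x)
    have i2: "(\<lambda>t. a t * F t ^ Suc n) integrable_on {0..x}"
      unfolding F_def[abs_def] using pow_int(1)[OF x aI[OF x] a0, of x "Suc n"] x by (simp del: power_Suc)
    have "norm (D (Suc n) x) \<le> integral {0..x} (\<lambda>t. a t * norm (D n t))"
      unfolding Deq by (intro integral_norm_bound_integral dI i1 bnd) auto
    also have "\<dots> \<le> integral {0..x} (\<lambda>t. (norm M0 / fact (Suc n)) * (a t * F t ^ Suc n))"
    proof (rule integral_le[OF i1])
      show "(\<lambda>t. (norm M0 / fact (Suc n)) * (a t * F t ^ Suc n)) integrable_on {0..x}"
        using i2 by (rule integrable_on_mult_right)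
      fix t assume t: "t \<in> {0..x}"
      have "a t * norm (D n t) \<le> a t * (norm M0 * (F t ^ Suc n / fact (Suc n)))"
        using Suc.IH[of t] t a0[of t] by (intro mult_left_mono) auto
      then show "a t * norm (D n t) \<le> (norm M0 / fact (Suc n)) * (a t * F t ^ Suc n)"
        by (simp add: algebra_simps)
    qed
    also have "\<dots> = (norm M0 / fact (Suc n)) * (F x ^ Suc (Suc n) / real (Suc (Suc n)))"
      using pow_int(2)[OF x aI[OF x] a0, of x "Suc n"] x by (simp add: F_def[abs_def])
    also have "\<dots> = norm M0 * (F x ^ Suc (Suc n) / fact (Suc (Suc n)))"
      by (simp add: field_simps)
    finally show ?case .
  qed
  have sumg: "summable (\<lambda>n. norm M0 * (y ^ Suc n / fact (Suc n)))" for y :: real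
  proof -
    have "summable (\<lambda>n. y ^ n / fact n)" using summable_exp[of y] by (simp add: field_simps)
    then have "summable (\<lambda>n. y ^ Suc n / fact (Suc n))"
      by (subst summable_Suc_iff)
    then show ?thesis by (rule summable_mult)
  qed
  have sumD: "summable (\<lambda>n. D n x)" if "0 \<le> x" for x
    by (rule summable_comparison_test[OF _ sumg[of "F x"]]) (use Dbound that in auto)
  define M where "M x = M0 + suminf (\<lambda>n. D n x)" for x
  have Psum: "P n x = M0 + (\<Sum>k<n. D k x)" for n x
    by (induction n) (auto simp: P0 D_def)
  have Pconv: "(\<lambda>n. P n x) \<longlonglongrightarrow> M x" if "0 \<le> x" for x
    unfolding Psum M_def by (intro tendsto_add tendsto_const summable_LIMSEQ sumD that)
  define Cx where "Cx x = norm M0 + suminf (\<lambda>n. norm M0 * (F x ^ Suc n / fact (Suc n)))" for x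
  have Pb: "norm (P n t) \<le> Cx x" if "0 \<le> t" "t \<le> x" for n t x
  proof -
    have "norm (P n t) \<le> norm M0 + norm (\<Sum>k<n. D k t)"
      unfolding Psum by (rule norm_triangle_ineq)
    also have "norm (\<Sum>k<n. D k t) \<le> (\<Sum>k<n. norm (D k t))" by (rule norm_sum)
    also have "(\<Sum>k<n. norm (D k t)) \<le> (\<Sum>k<n. norm M0 * (F x ^ Suc k / fact (Suc k)))"
    proof (rule sum_mono)
      fix k
      have "F t ^ Suc k \<le> F x ^ Suc k" using F0[of t] Fmono[of t x] that by (intro power_mono) auto
      then have "norm M0 * (F t ^ Suc k / fact (Suc k)) \<le> norm M0 * (F x ^ Suc k / fact (Suc k))"
        by (intro mult_left_mono divide_right_mono) auto
      then show "norm (D k t) \<le> norm M0 * (F x ^ Suc k / fact (Suc k))"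
        using Dbound[of t k] that by linarith
    qed
    also have "\<dots> \<le> suminf (\<lambda>n. norm M0 * (F x ^ Suc n / fact (Suc n)))"
      using F0[of x] that by (intro sum_le_suminf sumg) auto
    finally show ?thesis unfolding Cx_def by simp
  qed
  have blin: "bounded_linear (B t)" for t using lin[of t] by (simp add: linear_conv_bounded_linear)
  have main: "(\<lambda>t. B t (M t)) integrable_on {0..x} \<and> M x = M0 + integral {0..x} (\<lambda>t. B t (M t))"
    if x: "0 \<le> x" for x
  proof -
    have dc1: "(\<lambda>t. B t (M t)) integrable_on {0..x}"
      and dc2: "(\<lambda>k. integral {0..x} (\<lambda>t. B t (P k t))) \<longlonglongrightarrow> integral {0..x} (\<lambda>t. B t (M t))"
    proof -
      have h: "(\<lambda>t. a t * Cx x) integrable_on {0..x}" by (intro integrable_on_mult_left aI x)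
      have le: "norm (B t (P k t)) \<le> a t * Cx x" if "t \<in> {0..x}" for k t
      proof -
        have "norm (B t (P k t)) \<le> a t * norm (P k t)" using bnd that by auto
        also have "\<dots> \<le> a t * Cx x" using Pb[of t x k] that a0[of t] by (intro mult_left_mono) auto
        finally show ?thesis .
      qed
      have conv: "(\<lambda>k. B t (P k t)) \<longlonglongrightarrow> B t (M t)" if "t \<in> {0..x}" for t
        using bounded_linear.tendsto[OF blin Pconv[of t]] that by auto
      show "(\<lambda>t. B t (M t)) integrable_on {0..x}"
        by (rule dominated_convergence(1)[OF intg[OF x] h le conv])
      show "(\<lambda>k. integral {0..x} (\<lambda>t. B t (P k t))) \<longlonglongrightarrow> integral {0..x} (\<lambda>t. B t (M t))"
        by (rule dominated_convergence(2)[OF intg[OF x] h le conv])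
    qed
    have "(\<lambda>k. P (Suc k) x) \<longlonglongrightarrow> M0 + integral {0..x} (\<lambda>t. B t (M t))"
      unfolding PS by (intro tendsto_add tendsto_const dc2)
    moreover have "(\<lambda>k. P (Suc k) x) \<longlonglongrightarrow> M x"
      using Pconv[OF x] by (rule LIMSEQ_Suc)
    ultimately have "M x = M0 + integral {0..x} (\<lambda>t. B t (M t))"
      using LIMSEQ_unique by blast
    with dc1 show ?thesis by simp
  qed
  then show ?thesis by blast
qed

lemma two_ne_one_2: "(2::2) \<noteq> 1" by simp

lemma dc11[simp]: "dirac_coeff \<phi> z t $ 1 $ 1 = - \<i> * z" by (simp add: dirac_coeff_def)
lemma dc12[simp]: "dirac_coeff \<phi> z t $ 1 $ 2 = \<i> * \<phi> t" by (simp add: dirac_coeff_def)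
lemma dc21[simp]: "dirac_coeff \<phi> z t $ 2 $ 1 = - \<i> * cnj (\<phi> t)" by (simp add: dirac_coeff_def)
lemma dc22[simp]: "dirac_coeff \<phi> z t $ 2 $ 2 = \<i> * z" by (simp add: dirac_coeff_def)

lemma mv2: "(A *v u) $ i = A $ i $ 1 * u $ 1 + A $ i $ 2 * u $ 2"
  for A :: "'a::comm_semiring_1^2^2"
  by (simp add: matrix_vector_mult_def sum_2)

lemma mm2: "(A ** B) $ i $ j = A $ i $ 1 * B $ 1 $ j + A $ i $ 2 * B $ 2 $ j"
  for A :: "'a::comm_semiring_1^2^2"
  by (simp add: matrix_matrix_mult_def sum_2)

lemma norm_vec2: "norm (v :: 'a::real_normed_vector^2) = sqrt (norm (v $ 1)^2 + norm (v $ 2)^2)"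
  by (simp add: norm_vec_def L2_set_def sum_2)

lemma norm_vec2_sq: "(norm (v :: 'a::real_normed_vector^2))^2 = norm (v $ 1)^2 + norm (v $ 2)^2"
  by (simp add: norm_vec2)

lemma norm_vec2_l1: "norm (v :: 'a::real_normed_vector^2) \<le> norm (v $ 1) + norm (v $ 2)"
proof -
  have "norm v = L2_set (\<lambda>i. norm (v $ i)) UNIV" by (simp add: norm_vec_def)
  also have "\<dots> \<le> sum (\<lambda>i. norm (v $ i)) UNIV" by (rule L2_set_le_sum) auto
  finally show ?thesis by (simp add: sum_2)
qed

lemma vec_integrable:
  fixes f :: "real \<Rightarrow> 'a::euclidean_space^'n"
  assumes "\<And>i. (\<lambda>t. f t $ i) integrable_on S"
  shows "f integrable_on S"
proof -
  have lin: "bounded_linear (\<lambda>x::'a. axis i x :: 'a^'n)" for i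
  proof -
    have "linear (\<lambda>x::'a. axis i x :: 'a^'n)"
      by (rule linearI) (auto simp: axis_def vec_eq_iff)
    then show ?thesis by (simp add: linear_conv_bounded_linear)
  qed
  have "(\<lambda>t. \<Sum>i\<in>UNIV. axis i (f t $ i)) integrable_on S"
  proof (rule integrable_sum)
    show "finite (UNIV :: 'n set)" by simp
  next
    fix i
    show "(\<lambda>x. axis i (f x $ i)) integrable_on S"
      using integrable_linear[OF assms[of i] lin[of i]] by (simp add: o_def)
  qed
  moreover have "(\<Sum>i\<in>UNIV. axis i (f t $ i)) = f t" for t
    by (simp add: vec_eq_iff axis_def if_distrib sum.delta' cong: if_cong)
  ultimately show ?thesis by simp
qed

locale dloc =
  fixes \<phi> :: "real \<Rightarrow> complex"
  assumes loc: "\<And>x. x \<ge> 0 \<Longrightarrow> \<phi> absolutely_integrable_on {0..x}"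
begin

lemma phi_ai: "0 \<le> x \<Longrightarrow> (\<lambda>t. c * \<phi> t) absolutely_integrable_on {0..x}"
  using ai_cont_mult(1)[OF loc[of x], of "\<lambda>t. c"] by auto

lemma cphi_ai: "0 \<le> x \<Longrightarrow> (\<lambda>t. c * cnj (\<phi> t)) absolutely_integrable_on {0..x}"
proof -
  assume x: "0 \<le> x"
  have "(cnj \<circ> \<phi>) absolutely_integrable_on {0..x}"
    by (rule absolutely_integrable_linear[OF loc[OF x] bounded_linear_cnj])
  from ai_cont_mult(1)[OF this, of "\<lambda>t. c"] show ?thesis by (auto simp: o_def)
qed

lemma dc_ai: "0 \<le> x \<Longrightarrow> (\<lambda>t. dirac_coeff \<phi> z t $ i $ j) absolutely_integrable_on {0..x}"
proof -
  assume x: "0 \<le> x"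
  have c: "(\<lambda>t. c) absolutely_integrable_on {0..x}" for c :: complex
    by (rule absolutely_integrable_continuous_real) auto
  show ?thesis
    using exhaust_2[of i] exhaust_2[of j]
  proof (elim disjE)
  qed (use c phi_ai[OF x, of "\<i>"] cphi_ai[OF x, of "-\<i>"] in simp_all)
qed

definition dca :: "complex \<Rightarrow> real \<Rightarrow> real" where
  "dca z t = 4 * (norm z + norm (\<phi> t))"

lemma dca_int: "0 \<le> x \<Longrightarrow> dca z integrable_on {0..x}"
  unfolding dca_def[abs_def]
  by (intro integrable_on_mult_right integrable_add ai_norm_int loc) auto

lemma dca_nonneg: "0 \<le> dca z t" by (simp add: dca_def)

lemma dca_ai: "0 \<le> x \<Longrightarrow> dca z absolutely_integrable_on {0..x}"
  by (rule nonnegative_absolutely_integrable_1[OF dca_int]) (auto simp: dca_nonneg)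

lemma norm_mm2: "norm (A ** M) \<le> 2 * (norm (A$1$1) + norm (A$1$2) + norm (A$2$1) + norm (A$2$2)) * norm M"
  for A M :: "complex^2^2"
proof -
  have e: "norm ((A ** M) $ i $ j) \<le> (norm (A$i$1) + norm (A$i$2)) * norm M" for i j
  proof -
    have "norm ((A ** M) $ i $ j) \<le> norm (A$i$1) * norm (M$1$j) + norm (A$i$2) * norm (M$2$j)"
      unfolding mm2 by (rule order_trans[OF norm_triangle_ineq]) (simp add: norm_mult)
    also have "\<dots> \<le> norm (A$i$1) * norm M + norm (A$i$2) * norm M"
    proof -
      have "norm (M$k$j) \<le> norm M" for k
        using Finite_Cartesian_Product.norm_nth_le[of "M$k" j] Finite_Cartesian_Product.norm_nth_le[of M k] by linarith
      then show ?thesis by (intro add_mono mult_left_mono) auto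
    qed
    finally show ?thesis by (simp add: algebra_simps)
  qed
  have r: "norm ((A ** M) $ i) \<le> 2 * (norm (A$i$1) + norm (A$i$2)) * norm M" for i
    using norm_vec2_l1[of "(A ** M) $ i"] e[of i 1] e[of i 2] by linarith
  show ?thesis using norm_vec2_l1[of "A ** M"] r[of 1] r[of 2] by (simp add: algebra_simps)
qed

lemma dc_bound: "norm (dirac_coeff \<phi> z t ** M) \<le> dca z t * norm M" for M :: "complex^2^2"
  using norm_mm2[of "dirac_coeff \<phi> z t" M]
  by (simp add: dca_def norm_mult algebra_simps)

lemma dc_clos:
  assumes x: "0 \<le> x" and M: "continuous_on {0..x} M"
  shows "(\<lambda>t. dirac_coeff \<phi> z t ** M t) integrable_on {0..x}"
proof (rule vec_integrable, rule vec_integrable)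
  fix i j
  have "(\<lambda>t. dirac_coeff \<phi> z t $ i $ 1 * M t $ 1 $ j + dirac_coeff \<phi> z t $ i $ 2 * M t $ 2 $ j) integrable_on {0..x}"
    by (intro integrable_add ai_int ai_cont_mult(2)[OF dc_ai[OF x]] continuous_intros M)
  then show "(\<lambda>t. (dirac_coeff \<phi> z t ** M t) $ i $ j) integrable_on {0..x}"
    by (simp add: mm2)
qed

lemma mm_linear: "linear (\<lambda>M::complex^2^2. (A :: complex^2^2) ** M)"
proof (rule linearI)
  show "A ** (b1 + b2) = A ** b1 + A ** b2" for b1 b2 :: "complex^2^2" by (rule matrix_add_ldistrib)
  show "A ** (r *\<^sub>R b) = r *\<^sub>R (A ** b)" for r and b :: "complex^2^2"
    unfolding vec_eq_iff by (simp add: mm2 scaleR_right_distrib)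
qed

end

context dloc begin
lemma msol_exists: "\<exists>M. dirac_msol \<phi> z M \<and> M 0 = mat 1"
proof -
  obtain M where M: "\<forall>x\<ge>0. (\<lambda>t. dirac_coeff \<phi> z t ** M t) integrable_on {0..x} \<and>
      M x = mat 1 + integral {0..x} (\<lambda>t. dirac_coeff \<phi> z t ** M t)"
    by (rule picard[of "\<lambda>t M. dirac_coeff \<phi> z t ** M" "dca z" "mat 1", OF mm_linear dc_bound dca_int dca_nonneg dc_clos, THEN exE])
  have "M 0 = mat 1 + integral {0..0} (\<lambda>t. dirac_coeff \<phi> z t ** M t)" using M by blast
  then have "M 0 = mat 1" by simp
  with M show ?thesis unfolding dirac_msol_def by auto
qed

lemma msol_cont:
  assumes "dirac_msol \<phi> z M" "0 \<le> X"
  shows "continuous_on {0..X} M"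
proof -
  have "(\<lambda>t. dirac_coeff \<phi> z t ** M t) integrable_on {0..X}"
    and "\<And>x. x \<in> {0..X} \<Longrightarrow> M x = M 0 + integral {0..x} (\<lambda>t. dirac_coeff \<phi> z t ** M t)"
    using assms unfolding dirac_msol_def atLeastAtMost_iff by blast+
  then show ?thesis by (rule indef_cont)
qed

lemma msol_unique:
  assumes M: "dirac_msol \<phi> z M" and M': "dirac_msol \<phi> z M'" and M0: "M 0 = M' 0" and x: "0 \<le> x"
  shows "M x = M' x"
proof -
  define U where "U t = M t - M' t" for t
  have Uc: "continuous_on {0..x} U" unfolding U_def[abs_def]
    using msol_cont[OF M x] msol_cont[OF M' x] by (intro continuous_intros)
  have "U y = 0" if y: "y \<in> {0..x}" for y
  proof (rule volterra_unique[OF x dca_int[OF x] dca_nonneg Uc _ y])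
    fix y assume y: "y \<in> {0..x}"
    have iM: "(\<lambda>t. dirac_coeff \<phi> z t ** M t) integrable_on {0..y}"
      and eM: "M y = M 0 + integral {0..y} (\<lambda>t. dirac_coeff \<phi> z t ** M t)"
      using M y unfolding dirac_msol_def atLeastAtMost_iff by blast+
    have iM': "(\<lambda>t. dirac_coeff \<phi> z t ** M' t) integrable_on {0..y}"
      and eM': "M' y = M' 0 + integral {0..y} (\<lambda>t. dirac_coeff \<phi> z t ** M' t)"
      using M' y unfolding dirac_msol_def atLeastAtMost_iff by blast+
    have dI: "(\<lambda>t. dirac_coeff \<phi> z t ** U t) integrable_on {0..y}"
    proof -
      have "(\<lambda>t. dirac_coeff \<phi> z t ** M t - dirac_coeff \<phi> z t ** M' t) integrable_on {0..y}"
        by (rule integrable_diff[OF iM iM'])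
      then show ?thesis by (simp add: U_def linear_diff[OF mm_linear])
    qed
    have "U y = integral {0..y} (\<lambda>t. dirac_coeff \<phi> z t ** U t)"
      using eM eM' M0 by (simp add: U_def integral_diff[OF iM iM', symmetric] linear_diff[OF mm_linear])
    also have "norm \<dots> \<le> integral {0..y} (\<lambda>t. dca z t * norm (U t))"
    proof (rule integral_norm_bound_integral[OF dI])
      have Ucy: "continuous_on {0..y} U" using y by (intro continuous_on_subset[OF Uc]) auto
      show "(\<lambda>t. dca z t * norm (U t)) integrable_on {0..y}"
        using y by (intro ai_int ai_cont_mult(2)[OF dca_ai] continuous_intros Ucy) auto
    qed (rule dc_bound)
    finally show "norm (U y) \<le> integral {0..y} (\<lambda>t. dca z t * norm (U t))" .
  qed
  from this[of x] x show ?thesis by (simp add: U_def)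
qed

end

context dloc begin

lemma sol_int: "dirac_sol \<phi> z u \<Longrightarrow> 0 \<le> x \<Longrightarrow> (\<lambda>t. dirac_coeff \<phi> z t *v u t) integrable_on {0..x}"
  unfolding dirac_sol_def by blast

lemma sol_eq: "dirac_sol \<phi> z u \<Longrightarrow> 0 \<le> x \<Longrightarrow> u x = u 0 + integral {0..x} (\<lambda>t. dirac_coeff \<phi> z t *v u t)"
  unfolding dirac_sol_def by blast

lemma sol_cont: "dirac_sol \<phi> z u \<Longrightarrow> 0 \<le> X \<Longrightarrow> continuous_on {0..X} u"
  by (rule indef_cont[OF sol_int]) (auto intro: sol_eq)

lemma sol_comp:
  assumes u: "dirac_sol \<phi> z u" and x: "0 \<le> x"
  shows "u x $ k = u 0 $ k + integral {0..x} (\<lambda>t. (dirac_coeff \<phi> z t *v u t) $ k)"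
proof -
  have "integral {0..x} (\<lambda>t. (dirac_coeff \<phi> z t *v u t) $ k) = integral {0..x} (\<lambda>t. dirac_coeff \<phi> z t *v u t) $ k"
    using integral_linear[OF sol_int[OF u x] bounded_linear_vec_nth, of k] by (simp add: o_def)
  with sol_eq[OF u x] show ?thesis by simp
qed

lemma comp_ai:
  assumes u: "dirac_sol \<phi> z u" and X: "0 \<le> X"
  shows "(\<lambda>t. (dirac_coeff \<phi> z t *v u t) $ k) absolutely_integrable_on {0..X}"
proof -
  have uc: "continuous_on {0..X} u" by (rule sol_cont[OF u X])
  have "(\<lambda>t. dirac_coeff \<phi> z t $ k $ 1 * u t $ 1 + dirac_coeff \<phi> z t $ k $ 2 * u t $ 2) absolutely_integrable_on {0..X}"
    by (intro set_integral_add ai_cont_mult(2)[OF dc_ai[OF X]] continuous_intros uc)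
  then show ?thesis by (simp only: mv2)
qed

lemma sol_prod:
  assumes u: "dirac_sol \<phi> z u" and v: "dirac_sol \<phi> z' v" and x: "0 \<le> x"
  shows "(\<lambda>t. cnj ((dirac_coeff \<phi> z' t *v v t) $ k) * u t $ k + cnj (v t $ k) * (dirac_coeff \<phi> z t *v u t) $ k)
           absolutely_integrable_on {0..x}"
    "cnj (v x $ k) * u x $ k = cnj (v 0 $ k) * u 0 $ k +
       integral {0..x} (\<lambda>t. cnj ((dirac_coeff \<phi> z' t *v v t) $ k) * u t $ k + cnj (v t $ k) * (dirac_coeff \<phi> z t *v u t) $ k)"
proof -
  have a: "(\<lambda>t. cnj ((dirac_coeff \<phi> z' t *v v t) $ k)) absolutely_integrable_on {0..x}"
    using absolutely_integrable_linear[OF comp_ai[OF v x, of k] bounded_linear_cnj] by (simp add: o_def)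
  have b: "(\<lambda>t. (dirac_coeff \<phi> z t *v u t) $ k) absolutely_integrable_on {0..x}"
    by (rule comp_ai[OF u x])
  have f: "cnj (v y $ k) = cnj (v 0 $ k) + integral {0..y} (\<lambda>t. cnj ((dirac_coeff \<phi> z' t *v v t) $ k))"
    if "y \<in> {0..x}" for y
    using sol_comp[OF v, of y k] that by (simp add: integral_cnj)
  have g: "u y $ k = u 0 $ k + integral {0..y} (\<lambda>t. (dirac_coeff \<phi> z t *v u t) $ k)"
    if "y \<in> {0..x}" for y
    using sol_comp[OF u, of y k] that by simp
  show "(\<lambda>t. cnj ((dirac_coeff \<phi> z' t *v v t) $ k) * u t $ k + cnj (v t $ k) * (dirac_coeff \<phi> z t *v u t) $ k)
           absolutely_integrable_on {0..x}"
    by (rule prod_rule(1)[OF x a b f g])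
  show "cnj (v x $ k) * u x $ k = cnj (v 0 $ k) * u 0 $ k +
       integral {0..x} (\<lambda>t. cnj ((dirac_coeff \<phi> z' t *v v t) $ k) * u t $ k + cnj (v t $ k) * (dirac_coeff \<phi> z t *v u t) $ k)"
    by (rule prod_rule(2)[OF x a b f g])
qed

lemma sol_identity:
  assumes u: "dirac_sol \<phi> z u" and v: "dirac_sol \<phi> z' v" and x: "0 \<le> x"
  shows "cnj (v x $ 1) * u x $ 1 - cnj (v x $ 2) * u x $ 2 =
         cnj (v 0 $ 1) * u 0 $ 1 - cnj (v 0 $ 2) * u 0 $ 2 +
         \<i> * (cnj z' - z) * integral {0..x} (\<lambda>t. cnj (v t $ 1) * u t $ 1 + cnj (v t $ 2) * u t $ 2)"
proof -
  define I where "I k t = cnj ((dirac_coeff \<phi> z' t *v v t) $ k) * u t $ k + cnj (v t $ k) * (dirac_coeff \<phi> z t *v u t) $ k" for k t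
  have I1: "I 1 integrable_on {0..x}" and I2: "I 2 integrable_on {0..x}"
    unfolding I_def[abs_def] using sol_prod(1)[OF u v x] by (auto intro: ai_int)
  have pw: "I 1 t - I 2 t = \<i> * (cnj z' - z) * (cnj (v t $ 1) * u t $ 1 + cnj (v t $ 2) * u t $ 2)" for t
    unfolding I_def mv2 by (simp add: algebra_simps)
  have "cnj (v x $ 1) * u x $ 1 - cnj (v x $ 2) * u x $ 2 =
        cnj (v 0 $ 1) * u 0 $ 1 - cnj (v 0 $ 2) * u 0 $ 2 + (integral {0..x} (I 1) - integral {0..x} (I 2))"
    using sol_prod(2)[OF u v x, of 1] sol_prod(2)[OF u v x, of 2] unfolding I_def[abs_def] by simp
  also have "integral {0..x} (I 1) - integral {0..x} (I 2) = integral {0..x} (\<lambda>t. I 1 t - I 2 t)"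
    by (rule integral_diff[OF I1 I2, symmetric])
  also have "\<dots> = \<i> * (cnj z' - z) * integral {0..x} (\<lambda>t. cnj (v t $ 1) * u t $ 1 + cnj (v t $ 2) * u t $ 2)"
    unfolding pw by (rule integral_mult_right)
  finally show ?thesis .
qed

lemma qid:
  assumes u: "dirac_sol \<phi> z u" and x: "0 \<le> x"
  shows "norm (u x $ 1)^2 - norm (u x $ 2)^2 =
         norm (u 0 $ 1)^2 - norm (u 0 $ 2)^2 + 2 * Im z * integral {0..x} (\<lambda>t. norm (u t)^2)"
proof -
  have cn: "cnj c * c = complex_of_real (norm c ^ 2)" for c :: complex
    by (metis complex_norm_square mult.commute)
  have uc: "continuous_on {0..x} u" by (rule sol_cont[OF u x])
  have nI: "(\<lambda>t. norm (u t)^2) integrable_on {0..x}"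
    by (intro integrable_continuous_real continuous_intros uc)
  have ofr: "integral {0..x} (\<lambda>t. complex_of_real (norm (u t)^2)) = complex_of_real (integral {0..x} (\<lambda>t. norm (u t)^2))"
    using integral_linear[OF nI bounded_linear_of_real] by (simp add: o_def)
  have iz: "\<i> * (cnj z - z) = complex_of_real (2 * Im z)"
    by (simp add: complex_eq_iff)
  from sol_identity[OF u u x]
  have "complex_of_real (norm (u x $ 1)^2 - norm (u x $ 2)^2) =
        complex_of_real (norm (u 0 $ 1)^2 - norm (u 0 $ 2)^2) + complex_of_real (2 * Im z) *
          integral {0..x} (\<lambda>t. complex_of_real (norm (u t)^2))"
    unfolding cn iz by (simp add: norm_vec2_sq)
  also have "\<dots> = complex_of_real (norm (u 0 $ 1)^2 - norm (u 0 $ 2)^2 + 2 * Im z * integral {0..x} (\<lambda>t. norm (u t)^2))"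
    unfolding ofr by simp
  finally show ?thesis by (simp only: of_real_eq_iff)
qed

end

lemma L2_helper:
  fixes g :: "real \<Rightarrow> real"
  assumes g0: "\<And>t. 0 \<le> t \<Longrightarrow> 0 \<le> g t" and gI: "\<And>x. 0 \<le> x \<Longrightarrow> g integrable_on {0..x}"
    and gb: "\<And>x. 0 \<le> x \<Longrightarrow> integral {0..x} g \<le> C"
  shows "g integrable_on {0..}"
proof -
  define f where "f k t = (if t \<in> {..real k} then g t else 0)" for k :: nat and t
  have fI: "f k integrable_on {0..}" for k
    unfolding f_def integrable_restrict_Int using gI[of "real k"] by (simp add: Int_commute atLeastAtMost_def)
  have fint: "integral {0..} (f k) = integral {0..real k} g" for k
    unfolding f_def integral_restrict_Int by (simp add: atLeastAtMost_def Int_commute)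
  have "g integrable_on {0..} \<and> ((\<lambda>k. integral {0..} (f k)) \<longlongrightarrow> integral {0..} g) sequentially"
  proof (rule monotone_convergence_increasing[OF fI])
    show "f k t \<le> f (Suc k) t" if "t \<in> {0..}" for k t using that g0 by (auto simp: f_def)
    show "(\<lambda>k. f k t) \<longlonglongrightarrow> g t" if "t \<in> {0..}" for t
    proof (rule tendsto_eventually)
      obtain N :: nat where "t \<le> real N" using real_arch_simple by blast
      then show "\<forall>\<^sub>F k in sequentially. f k t = g t"
        by (intro eventually_sequentiallyI[of N]) (auto simp: f_def intro: order_trans)
    qed
    have "\<bar>integral {0..} (f k)\<bar> \<le> C" for k
    proof -
      have "0 \<le> integral {0..real k} g" using g0 gI[of "real k"] by (intro integral_nonneg) auto
      then show ?thesis using gb[of "real k"] by (simp add: fint)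
    qed
    then show "bounded (range (\<lambda>k. integral {0..} (f k)))"
      by (auto simp: bounded_iff)
  qed
  then show ?thesis by blast
qed

definition V2 :: "complex \<Rightarrow> complex^2" where "V2 w = (\<chi> i. if i = 1 then w else 1)"

lemma V2_1[simp]: "V2 w $ 1 = w" and V2_2[simp]: "V2 w $ 2 = 1" by (simp_all add: V2_def)

context dloc begin

lemma mv_linear: "bounded_linear (\<lambda>X::complex^2^2. X *v c)"
proof -
  have "linear (\<lambda>X::complex^2^2. X *v c)"
    by (rule linearI) (simp_all add: vec_eq_iff mv2 algebra_simps scaleR_right_distrib)
  then show ?thesis by (simp add: linear_conv_bounded_linear)
qed

lemma msol_col:
  assumes M: "dirac_msol \<phi> z M"
  shows "dirac_sol \<phi> z (\<lambda>x. M x *v c)"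
  unfolding dirac_sol_def
proof (intro allI impI conjI)
  fix x :: real assume x: "0 \<le> x"
  have iM: "(\<lambda>t. dirac_coeff \<phi> z t ** M t) integrable_on {0..x}"
    and eM: "M x = M 0 + integral {0..x} (\<lambda>t. dirac_coeff \<phi> z t ** M t)"
    using M x unfolding dirac_msol_def by blast+
  have "(\<lambda>t. (dirac_coeff \<phi> z t ** M t) *v c) integrable_on {0..x}"
    using integrable_linear[OF iM mv_linear] by (simp add: o_def)
  then show "(\<lambda>t. dirac_coeff \<phi> z t *v (M t *v c)) integrable_on {0..x}"
    by (simp add: matrix_vector_mul_assoc)
  have "integral {0..x} (\<lambda>t. (dirac_coeff \<phi> z t ** M t) *v c) = integral {0..x} (\<lambda>t. dirac_coeff \<phi> z t ** M t) *v c"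
    using integral_linear[OF iM mv_linear] by (simp add: o_def)
  then show "M x *v c = M 0 *v c + integral {0..x} (\<lambda>t. dirac_coeff \<phi> z t *v (M t *v c))"
    using eM by (simp add: matrix_vector_mul_assoc matrix_vector_mult_add_rdistrib)
qed

lemma sol_diff:
  assumes u: "dirac_sol \<phi> z u" and v: "dirac_sol \<phi> z v"
  shows "dirac_sol \<phi> z (\<lambda>x. u x - v x)"
  unfolding dirac_sol_def
proof (intro allI impI conjI)
  fix x :: real assume x: "0 \<le> x"
  have "(\<lambda>t. dirac_coeff \<phi> z t *v u t - dirac_coeff \<phi> z t *v v t) integrable_on {0..x}"
    by (rule integrable_diff[OF sol_int[OF u x] sol_int[OF v x]])
  then show "(\<lambda>t. dirac_coeff \<phi> z t *v (u t - v t)) integrable_on {0..x}"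
    by (simp add: matrix_vector_mult_diff_distrib)
  show "u x - v x = u 0 - v 0 + integral {0..x} (\<lambda>t. dirac_coeff \<phi> z t *v (u t - v t))"
    using sol_eq[OF u x] sol_eq[OF v x]
    by (simp add: matrix_vector_mult_diff_distrib integral_diff[OF sol_int[OF u x] sol_int[OF v x]])
qed

lemma nsq_int: "dirac_sol \<phi> z u \<Longrightarrow> 0 \<le> x \<Longrightarrow> (\<lambda>t. norm (u t)^2) integrable_on {0..x}"
  by (intro integrable_continuous_real continuous_intros sol_cont)

lemma nsq_int_nonneg: "dirac_sol \<phi> z u \<Longrightarrow> 0 \<le> x \<Longrightarrow> 0 \<le> integral {0..x} (\<lambda>t. norm (u t)^2)"
  by (intro integral_nonneg nsq_int) auto

lemma nsq_int_mono: "dirac_sol \<phi> z u \<Longrightarrow> 0 \<le> x \<Longrightarrow> x \<le> y \<Longrightarrow>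
    integral {0..x} (\<lambda>t. norm (u t)^2) \<le> integral {0..y} (\<lambda>t. norm (u t)^2)"
  by (intro integral_subset_le nsq_int) auto

lemma L2_unique:
  assumes z: "0 < Im z"
    and u: "dirac_sol \<phi> z u" "(\<lambda>x. (norm (u x))\<^sup>2) integrable_on {0..}" "u 0 = V2 w"
    and v: "dirac_sol \<phi> z v" "(\<lambda>x. (norm (v x))\<^sup>2) integrable_on {0..}" "v 0 = V2 w'"
  shows "w = w'"
proof (rule ccontr)
  assume ne: "w \<noteq> w'"
  define d where "d x = u x - v x" for x
  have d: "dirac_sol \<phi> z d" unfolding d_def[abs_def] by (rule sol_diff[OF u(1) v(1)])
  define \<delta> where "\<delta> = norm (w - w')^2"
  have \<delta>: "\<delta> > 0" using ne by (simp add: \<delta>_def)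
  have d0: "d 0 $ 1 = w - w'" "d 0 $ 2 = 0" using u(3) v(3) by (simp_all add: d_def)
  define S where "S = integral {0..} (\<lambda>t. 2 * norm (u t)^2 + 2 * norm (v t)^2)"
  have SI: "(\<lambda>t. 2 * norm (u t)^2 + 2 * norm (v t)^2) integrable_on {0..}"
    by (intro integrable_add integrable_on_mult_right u(2) v(2))
  have pt: "\<delta> \<le> 2 * norm (u t)^2 + 2 * norm (v t)^2" if t: "0 \<le> t" for t
  proof -
    have "\<delta> \<le> norm (d t $ 1)^2 - norm (d t $ 2)^2"
      using qid[OF d t] d0 nsq_int_nonneg[OF d t] z by (simp add: \<delta>_def)
    also have "\<dots> \<le> norm (d t)^2" by (simp add: norm_vec2_sq)
    also have "norm (d t) \<le> norm (u t) + norm (v t)" unfolding d_def by (rule norm_triangle_ineq4)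
    then have "norm (d t)^2 \<le> (norm (u t) + norm (v t))^2" by (simp add: power_mono)
    also have "\<dots> \<le> 2 * norm (u t)^2 + 2 * norm (v t)^2"
    proof -
      have "(norm (u t) + norm (v t))^2 = 2 * norm (u t)^2 + 2 * norm (v t)^2 - (norm (u t) - norm (v t))^2"
        by (simp add: power2_eq_square algebra_simps)
      moreover have "0 \<le> (norm (u t) - norm (v t))^2" by simp
      ultimately show ?thesis by linarith
    qed
    finally show ?thesis by simp
  qed
  have "\<delta> * x \<le> S" if x: "0 \<le> x" for x
  proof -
    have "\<delta> * x = integral {0..x} (\<lambda>t. \<delta>)" using x by simp
    also have "\<dots> \<le> integral {0..x} (\<lambda>t. 2 * norm (u t)^2 + 2 * norm (v t)^2)"
      using pt by (intro integral_le integrable_on_subinterval[OF SI]) auto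
    also have "\<dots> \<le> S" unfolding S_def
      by (intro integral_subset_le SI integrable_on_subinterval[OF SI]) auto
    finally show ?thesis .
  qed
  moreover have "\<delta> * (\<bar>S\<bar> / \<delta> + 1) = \<bar>S\<bar> + \<delta>" using \<delta> by (simp add: field_simps)
  moreover have "0 \<le> \<bar>S\<bar> / \<delta> + 1" using \<delta> by (simp add: add_nonneg_nonneg)
  ultimately have "\<bar>S\<bar> + \<delta> \<le> S" by metis
  with \<delta> show False by linarith
qed

end

context dloc begin

lemma weyl:
  assumes z: "0 < Im z"
  shows "\<exists>\<Psi>. dirac_sol \<phi> z \<Psi> \<and> \<Psi> 0 = V2 (schur \<phi> z) \<and>
     (\<forall>x\<ge>0. 2 * Im z * integral {0..x} (\<lambda>t. norm (\<Psi> t)^2) \<le> 1 - norm (schur \<phi> z)^2)"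
proof -
  obtain M where M: "dirac_msol \<phi> z M" and M0: "M 0 = mat 1" using msol_exists by blast
  define U where "U w x = M x *v V2 w" for w x
  have Usol: "dirac_sol \<phi> z (U w)" for w unfolding U_def[abs_def] by (rule msol_col[OF M])
  have U0: "U w 0 = V2 w" for w by (simp add: U_def M0)
  have Uq: "norm (U w x $ 1)^2 - norm (U w x $ 2)^2 = norm w ^2 - 1 + 2 * Im z * integral {0..x} (\<lambda>t. norm (U w t)^2)"
    if "0 \<le> x" for w x using qid[OF Usol that] by (simp add: U0)
  define D where "D n = {w. norm w \<le> 1 \<and> norm (U w (real n) $ 1) \<le> norm (U w (real n) $ 2)}" for n :: nat
  have Dalt: "D n = cball 0 1 \<inter> {w. norm (M (real n) $ 1 $ 1 * w + M (real n) $ 1 $ 2) \<le> norm (M (real n) $ 2 $ 1 * w + M (real n) $ 2 $ 2)}" for n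
    by (auto simp: D_def U_def mv2)
  have Dc: "compact (D n)" for n
    unfolding Dalt by (intro compact_Int_closed compact_cball closed_Collect_le continuous_intros)
  have Dbound: "2 * Im z * integral {0..real n} (\<lambda>t. norm (U w t)^2) \<le> 1 - norm w ^2" if "w \<in> D n" for w n
  proof -
    have a: "norm (U w (real n) $ 1) \<le> norm (U w (real n) $ 2)" using that by (simp add: D_def)
    have "norm (U w (real n) $ 1)^2 \<le> norm (U w (real n) $ 2)^2"
      by (rule power_mono[OF a norm_ge_zero])
    then show ?thesis using Uq[of "real n" w] by linarith
  qed
  have Dne: "D n \<noteq> {}" for n
  proof -
    define m where "m = M (real n)"
    define e1 :: "complex^2" where "e1 = (\<chi> i. if i = 1 then 1 else 0)"
    have c1: "dirac_sol \<phi> z (\<lambda>x. M x *v e1)" by (rule msol_col[OF M])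
    have e1a: "(M (real n) *v e1) $ 1 = m $ 1 $ 1" "(M (real n) *v e1) $ 2 = m $ 2 $ 1"
      by (simp_all add: m_def e1_def mv2)
    have e1b: "(M 0 *v e1) $ 1 = 1" "(M 0 *v e1) $ 2 = 0" by (simp_all add: M0 e1_def)
    have q: "norm (m $ 1 $ 1)^2 - norm (m $ 2 $ 1)^2 = 1 + 2 * Im z * integral {0..real n} (\<lambda>t. norm (M t *v e1)^2)"
      using qid[OF c1, of "real n"] unfolding e1a e1b by simp
    have "0 \<le> integral {0..real n} (\<lambda>t. norm (M t *v e1)^2)" using nsq_int_nonneg[OF c1, of "real n"] by simp
    then have "0 \<le> 2 * Im z * integral {0..real n} (\<lambda>t. norm (M t *v e1)^2)" using z by simp
    then have ge: "norm (m $ 1 $ 1)^2 - norm (m $ 2 $ 1)^2 \<ge> 1" using q by linarith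
    have m11: "m $ 1 $ 1 \<noteq> 0"
    proof
      assume "m $ 1 $ 1 = 0"
      with ge have "1 \<le> - (norm (m $ 2 $ 1)^2)" by simp
      moreover have "0 \<le> norm (m $ 2 $ 1)^2" by simp
      ultimately show False by linarith
    qed
    define w0 where "w0 = - m $ 1 $ 2 / m $ 1 $ 1"
    have u1: "U w0 (real n) $ 1 = 0" using m11 by (simp add: U_def mv2 w0_def m_def[symmetric] field_simps)
    have "norm w0 ^2 - 1 + 2 * Im z * integral {0..real n} (\<lambda>t. norm (U w0 t)^2) \<le> 0"
    proof -
      have e: "- (norm (U w0 (real n) $ 2)^2) = norm w0 ^2 - 1 + 2 * Im z * integral {0..real n} (\<lambda>t. norm (U w0 t)^2)"
        using Uq[of "real n" w0] u1 by simp
      show ?thesis using e zero_le_power2[of "norm (U w0 (real n) $ 2)"] by linarith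
    qed
    moreover have "0 \<le> 2 * Im z * integral {0..real n} (\<lambda>t. norm (U w0 t)^2)"
      using nsq_int_nonneg[OF Usol, of "real n"] z by simp
    ultimately have "norm w0 ^2 \<le> 1^2" by simp
    then have "norm w0 \<le> 1" by (rule power2_le_imp_le) simp
    with u1 have "w0 \<in> D n" by (simp add: D_def)
    then show ?thesis by blast
  qed
  have Dmono: "D n \<subseteq> D m" if "m \<le> n" for m n
  proof
    fix w assume w: "w \<in> D n"
    have mm: "integral {0..real m} (\<lambda>t. norm (U w t)^2) \<le> integral {0..real n} (\<lambda>t. norm (U w t)^2)"
      using that by (intro nsq_int_mono[OF Usol]) auto
    have "2 * Im z * integral {0..real m} (\<lambda>t. norm (U w t)^2) \<le> 1 - norm w ^2"
      using mult_left_mono[OF mm, of "2 * Im z"] Dbound[OF w] z by linarith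
    then have "norm (U w (real m) $ 1)^2 \<le> norm (U w (real m) $ 2)^2" using Uq[of "real m" w] by linarith
    then have "norm (U w (real m) $ 1) \<le> norm (U w (real m) $ 2)" by (rule power2_le_imp_le) simp
    with w show "w \<in> D m" by (simp add: D_def)
  qed
  have "\<Inter>(range D) \<noteq> {}" by (rule compact_nest[OF Dc Dne Dmono])
  then obtain w0 where "w0 \<in> \<Inter>(range D)" by (meson ex_in_conv)
  then have w0: "\<And>n. w0 \<in> D n" by simp
  define \<Psi> where "\<Psi> = U w0"
  have bnd: "2 * Im z * integral {0..x} (\<lambda>t. norm (\<Psi> t)^2) \<le> 1 - norm w0 ^2" if x: "0 \<le> x" for x
  proof -
    obtain n :: nat where n: "x \<le> real n" using real_arch_simple by blast
    have mm: "integral {0..x} (\<lambda>t. norm (\<Psi> t)^2) \<le> integral {0..real n} (\<lambda>t. norm (\<Psi> t)^2)"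
      unfolding \<Psi>_def using x n by (intro nsq_int_mono[OF Usol]) auto
    show ?thesis using mult_left_mono[OF mm, of "2 * Im z"] Dbound[OF w0[of n]] z unfolding \<Psi>_def by linarith
  qed
  have L2: "(\<lambda>x. (norm (\<Psi> x))\<^sup>2) integrable_on {0..}"
  proof (rule L2_helper)
    show "integral {0..x} (\<lambda>t. norm (\<Psi> t)^2) \<le> (1 - norm w0 ^2) / (2 * Im z)" if "0 \<le> x" for x
      using bnd[OF that] z by (simp add: field_simps)
  qed (auto simp: \<Psi>_def intro: nsq_int[OF Usol])
  have sch: "schur \<phi> z = w0"
    unfolding schur_def
  proof (rule the_equality)
    show "\<exists>\<Psi>. dirac_sol \<phi> z \<Psi> \<and> (\<lambda>x. (norm (\<Psi> x))\<^sup>2) integrable_on {0..} \<and> \<Psi> 0 = (\<chi> i. if i = 1 then w0 else 1)"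
      using Usol L2 U0 unfolding \<Psi>_def V2_def by blast
    fix w assume "\<exists>\<Psi>. dirac_sol \<phi> z \<Psi> \<and> (\<lambda>x. (norm (\<Psi> x))\<^sup>2) integrable_on {0..} \<and> \<Psi> 0 = (\<chi> i. if i = 1 then w else 1)"
    then obtain \<Psi>' where P': "dirac_sol \<phi> z \<Psi>'" "(\<lambda>x. (norm (\<Psi>' x))\<^sup>2) integrable_on {0..}" "\<Psi>' 0 = V2 w"
      unfolding V2_def by blast
    show "w = w0"
      by (rule L2_unique[OF z P' Usol[of w0] L2[unfolded \<Psi>_def] U0])
  qed
  show ?thesis
    using Usol[of w0] U0[of w0] bnd unfolding sch \<Psi>_def by blast
qed

end

lemma cs2: "a1 * b1 + a2 * b2 \<le> sqrt (a1^2 + a2^2) * sqrt (b1^2 + b2^2)" for a1 a2 b1 b2 :: real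
proof -
  have "(a1 * b1 + a2 * b2)^2 \<le> (a1^2 + a2^2) * (b1^2 + b2^2)"
  proof -
    have "(a1^2 + a2^2) * (b1^2 + b2^2) - (a1 * b1 + a2 * b2)^2 = (a1 * b2 - a2 * b1)^2"
      by (simp add: power2_eq_square algebra_simps)
    moreover have "0 \<le> (a1 * b2 - a2 * b1)^2" by simp
    ultimately show ?thesis by linarith
  qed
  then have "a1 * b1 + a2 * b2 \<le> sqrt ((a1^2 + a2^2) * (b1^2 + b2^2))" by (rule real_le_rsqrt)
  then show ?thesis by (simp add: real_sqrt_mult)
qed

lemma adj_bound:
  fixes T :: "complex^2^2" and y :: "complex^2"
  shows "norm (\<chi> j. cnj (T$1$j) * y$1 + cnj (T$2$j) * y$2) \<le> onorm ((*v) T) * norm y"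
proof -
  define p :: "complex^2" where "p = (\<chi> j. cnj (T$1$j) * y$1 + cnj (T$2$j) * y$2)"
  have p1: "p$1 = cnj (T$1$1) * y$1 + cnj (T$2$1) * y$2" and p2: "p$2 = cnj (T$1$2) * y$1 + cnj (T$2$2) * y$2"
    by (simp_all add: p_def)
  define q where "q = T *v p"
  have q1: "q$1 = T$1$1 * p$1 + T$1$2 * p$2" and q2: "q$2 = T$2$1 * p$1 + T$2$2 * p$2"
    by (simp_all add: q_def mv2)
  have key: "complex_of_real (norm p ^2) = y$1 * cnj (q$1) + y$2 * cnj (q$2)"
  proof -
    have "complex_of_real (norm p ^2) = p$1 * cnj (p$1) + p$2 * cnj (p$2)"
      by (simp only: norm_vec2_sq of_real_add complex_norm_square)
    also have "\<dots> = y$1 * cnj (q$1) + y$2 * cnj (q$2)"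
      unfolding q1 q2 unfolding p1 p2 by (simp add: algebra_simps)
    finally show ?thesis .
  qed
  have "norm p ^2 = norm (complex_of_real (norm p ^2))" by (subst norm_of_real) simp
  also have "\<dots> = norm (y$1 * cnj (q$1) + y$2 * cnj (q$2))" by (simp only: key)
  also have "\<dots> \<le> norm (y$1) * norm (q$1) + norm (y$2) * norm (q$2)"
    by (rule order_trans[OF norm_triangle_ineq]) (simp add: norm_mult)
  also have "\<dots> \<le> norm y * norm q"
    unfolding norm_vec2[of y] norm_vec2[of q] by (rule cs2)
  also have "norm q \<le> onorm ((*v) T) * norm p"
    unfolding q_def by (rule onorm[OF matrix_vector_mul_bounded_linear])
  finally have *: "norm p ^2 \<le> norm y * (onorm ((*v) T) * norm p)"
    by (simp add: mult_left_mono)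
  show ?thesis
  proof (cases "norm p = 0")
    case True
    then show ?thesis using onorm_pos_le[OF matrix_vector_mul_bounded_linear, of T] p_def
      by (simp add: mult_nonneg_nonneg)
  next
    case False
    then have "norm p > 0" by simp
    with * have "norm p \<le> norm y * onorm ((*v) T)"
      by (simp add: power2_eq_square algebra_simps)
    then show ?thesis by (simp add: p_def mult.commute)
  qed
qed

lemma onorm_mat_bound:
  fixes T :: "complex^2^2"
  shows "onorm ((*v) T) \<le> 4 * norm T"
proof (rule onorm_le)
  fix v :: "complex^2"
  have en: "norm (T$i$j) \<le> norm T" for i j
    using Finite_Cartesian_Product.norm_nth_le[of "T$i" j] Finite_Cartesian_Product.norm_nth_le[of T i] by linarith
  have vn: "norm (v$j) \<le> norm v" for j by (rule Finite_Cartesian_Product.norm_nth_le)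
  have c: "norm ((T *v v)$i) \<le> 2 * norm T * norm v" for i
  proof -
    have "norm ((T *v v)$i) \<le> norm (T$i$1) * norm (v$1) + norm (T$i$2) * norm (v$2)"
      unfolding mv2 by (rule order_trans[OF norm_triangle_ineq]) (simp add: norm_mult)
    also have "\<dots> \<le> norm T * norm v + norm T * norm v"
      by (intro add_mono mult_mono en vn) auto
    finally show ?thesis by (simp add: algebra_simps)
  qed
  show "norm (T *v v) \<le> 4 * norm T * norm v"
    using norm_vec2_l1[of "T *v v"] c[of 1] c[of 2] by simp
qed

lemma core_ineq:
  fixes L k r eps G I :: real
  assumes L: "0 < L" and k: "0 < k" and r: "0 \<le> r" and G: "0 \<le> G" and I: "0 \<le> I"
    and CS: "G^2 \<le> L * I" and eL: "eps * L = 1/2" and eps: "0 < eps"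
    and pos: "0 < r / k - eps * G \<Longrightarrow> L * (r / k - eps * G)^2 \<le> I"
  shows "4/9 * L * r^2 / k^2 \<le> I"
proof -
  define J where "J = sqrt (L * I)"
  define a where "a = L * r / k"
  have J0: "0 \<le> J" using L I by (simp add: J_def)
  have J2: "J^2 = L * I" using L I by (simp add: J_def)
  have GJ: "G \<le> J" unfolding J_def using CS by (rule real_le_rsqrt)
  have a0: "0 \<le> a" using L k r by (simp add: a_def)
  have La: "L * (r / k - eps * G) = a - G / 2"
    using eL by (simp add: a_def algebra_simps)
  have Ja: "2/3 * a \<le> J"
  proof (cases "0 < r / k - eps * G")
    case False
    then have "L * (r / k) \<le> L * (eps * G)" using L by (intro mult_left_mono) auto
    moreover have "L * (eps * G) = G / 2" using eL by (simp add: algebra_simps)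
    moreover have "a = L * (r / k)" by (simp add: a_def)
    ultimately have "a \<le> G / 2" by linarith
    then show ?thesis using GJ a0 by linarith
  next
    case True
    have "(L * (r / k - eps * G))^2 = L * (L * (r / k - eps * G)^2)"
      by (simp add: power2_eq_square algebra_simps)
    also have "\<dots> \<le> L * I" using pos[OF True] L by (intro mult_left_mono) auto
    finally have "(L * (r / k - eps * G))^2 \<le> J^2" using J2 by simp
    then have "L * (r / k - eps * G) \<le> J" by (rule power2_le_imp_le[OF _ J0])
    then show ?thesis using La GJ by linarith
  qed
  have "(2/3 * a)^2 \<le> J^2" using Ja a0 by (intro power_mono) auto
  then have "4/9 * a^2 \<le> L * I" using J2 by (simp add: power2_eq_square)
  then have "L * (4/9 * L * r^2 / k^2) \<le> L * I" by (simp add: a_def power2_eq_square field_simps)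
  then show ?thesis by (rule mult_left_le_imp_le[OF _ L])
qed

lemma final_ineq:
  fixes \<sigma> K :: real
  assumes s0: "0 \<le> \<sigma>" and K: "0 < K" and h: "4/9 * (1 + \<sigma>^2) / K \<le> 1 - \<sigma>^2"
  shows "\<sigma> < 1" "(1 + \<sigma>) / (1 - \<sigma>) \<le> 9/2 * K"
proof -
  have "0 < 4/9 * (1 + \<sigma>^2) / K" using K by (simp add: add_pos_nonneg)
  then have pos: "0 < 1 - \<sigma>^2" using h by linarith
  show s1: "\<sigma> < 1"
  proof (rule ccontr)
    assume "\<not> \<sigma> < 1"
    then have "1 \<le> \<sigma>" by simp
    then have "1 \<le> \<sigma>^2" using one_le_power by blast
    with pos show False by simp
  qed
  have h2: "4/9 * (1 + \<sigma>^2) \<le> K * (1 - \<sigma>^2)" using h K by (simp add: field_simps)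
  have "(1 + \<sigma>)^2 \<le> 2 * (1 + \<sigma>^2)"
  proof -
    have "2 * (1 + \<sigma>^2) - (1 + \<sigma>)^2 = (1 - \<sigma>)^2" by (simp add: power2_eq_square algebra_simps)
    then show ?thesis by (smt (verit) zero_le_power2)
  qed
  then have "(1 + \<sigma>)^2 \<le> 9/2 * K * (1 - \<sigma>^2)" using h2 by linarith
  moreover have "(1 + \<sigma>)^2 = (1 + \<sigma>) / (1 - \<sigma>) * (1 - \<sigma>^2)"
    using s1 by (simp add: power2_eq_square field_simps)
  ultimately have "(1 + \<sigma>) / (1 - \<sigma>) * (1 - \<sigma>^2) \<le> 9/2 * K * (1 - \<sigma>^2)" by linarith
  then show "(1 + \<sigma>) / (1 - \<sigma>) \<le> 9/2 * K" by (rule mult_right_le_imp_le[OF _ pos])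
qed

context dloc begin

lemma main_est:
  fixes \<xi> :: complex and lam eps :: real
  assumes xi: "norm \<xi> = 1" and eps: "eps > 0"
  shows "norm ((1 + \<xi> * schur \<phi> (complex_of_real lam + \<i> * complex_of_real eps)) /
               (1 - \<xi> * schur \<phi> (complex_of_real lam + \<i> * complex_of_real eps)))
         \<le> (3 + sqrt 8) * (SUP x\<in>{0..1/(2*eps)}. (onorm (\<lambda>v. transfer \<phi> lam x *v v))\<^sup>2)"
proof -
  define z where "z = complex_of_real lam + \<i> * complex_of_real eps"
  have Imz: "Im z = eps" by (simp add: z_def)
  define s where "s = schur \<phi> z"
  have "\<exists>\<Psi>. dirac_sol \<phi> z \<Psi> \<and> \<Psi> 0 = V2 s \<and>
     (\<forall>x\<ge>0. 2 * eps * integral {0..x} (\<lambda>t. norm (\<Psi> t)^2) \<le> 1 - norm s^2)"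
    using weyl[of z] eps unfolding Imz s_def by blast
  then obtain \<Psi> where \<Psi>: "dirac_sol \<phi> z \<Psi>" and \<Psi>0: "\<Psi> 0 = V2 s"
    and \<Psi>b: "\<And>x. 0 \<le> x \<Longrightarrow> 2 * eps * integral {0..x} (\<lambda>t. norm (\<Psi> t)^2) \<le> 1 - norm s^2"
    by blast
  obtain Ml where Ml: "dirac_msol \<phi> (complex_of_real lam) Ml" and Ml0: "Ml 0 = mat 1"
    using msol_exists by blast
  have Ttr: "transfer \<phi> lam x = Ml x" if x: "0 \<le> x" for x
    unfolding transfer_def
  proof (rule the_equality)
    show "\<exists>M. dirac_msol \<phi> (complex_of_real lam) M \<and> M 0 = mat 1 \<and> M x = Ml x" using Ml Ml0 by blast
    fix N assume "\<exists>M. dirac_msol \<phi> (complex_of_real lam) M \<and> M 0 = mat 1 \<and> M x = N"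
    then obtain M where M: "dirac_msol \<phi> (complex_of_real lam) M" "M 0 = mat 1" "M x = N" by blast
    have "M x = Ml x" by (rule msol_unique[OF M(1) Ml _ x]) (simp add: M(2) Ml0)
    then show "N = Ml x" using M(3) by simp
  qed
  define L where "L = 1 / (2 * eps)"
  have L0: "0 < L" and eL: "eps * L = 1/2" using eps by (simp_all add: L_def)
  have Mc: "continuous_on {0..x} Ml" if "0 \<le> x" for x by (rule msol_cont[OF Ml that])
  obtain C where C: "\<And>x. x \<in> {0..L} \<Longrightarrow> norm (Ml x) \<le> C"
    using compact_imp_bounded[OF compact_continuous_image[OF Mc[of L] compact_Icc]] L0
    unfolding bounded_iff by (metis atLeastAtMost_iff image_eqI less_imp_le)
  define f where "f x = (onorm (\<lambda>v. transfer \<phi> lam x *v v))\<^sup>2" for x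
  have fM: "f x = (onorm ((*v) (Ml x)))^2" if "0 \<le> x" for x using Ttr[OF that] by (simp add: f_def)
  have on0: "0 \<le> onorm ((*v) T)" for T :: "complex^2^2"
    by (rule onorm_pos_le[OF matrix_vector_mul_bounded_linear])
  have fb: "f x \<le> (4 * C)^2" if x: "x \<in> {0..L}" for x
  proof -
    have a: "onorm ((*v) (Ml x)) \<le> 4 * C"
      using onorm_mat_bound[of "Ml x"] C[OF x] by linarith
    have "(onorm ((*v) (Ml x)))^2 \<le> (4 * C)^2" by (rule power_mono[OF a on0])
    then show ?thesis using fM[of x] x by simp
  qed
  have bdd: "bdd_above (f ` {0..L})" by (rule bdd_aboveI2[of _ _ "(4*C)^2"]) (use fb in auto)
  define K where "K = (SUP x\<in>{0..L}. f x)"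
  have fK: "f x \<le> K" if "x \<in> {0..L}" for x unfolding K_def by (rule cSUP_upper[OF that bdd])
  have f0: "f 0 = 1"
  proof -
    have "(*v) (mat 1 :: complex^2^2) = (\<lambda>v. v)" by (rule ext) simp
    then show ?thesis using fM[of 0] by (simp add: Ml0 onorm_id)
  qed
  have K1: "1 \<le> K" using fK[of 0] f0 L0 by auto
  define k where "k = sqrt K"
  have k0: "0 < k" and kK: "k^2 = K" using K1 by (auto simp: k_def)
  have onk: "onorm ((*v) (Ml t)) \<le> k" if t: "t \<in> {0..L}" for t
  proof -
    have "(onorm ((*v) (Ml t)))^2 \<le> K" using fK[OF t] fM[of t] t by simp
    then show ?thesis unfolding k_def by (rule real_le_rsqrt)
  qed
  define e1 :: "complex^2" where "e1 = (\<chi> i. if i = 1 then 1 else 0)"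
  define e2 :: "complex^2" where "e2 = (\<chi> i. if i = 1 then 0 else 1)"
  have c1: "dirac_sol \<phi> (complex_of_real lam) (\<lambda>x. Ml x *v e1)" by (rule msol_col[OF Ml])
  have c2: "dirac_sol \<phi> (complex_of_real lam) (\<lambda>x. Ml x *v e2)" by (rule msol_col[OF Ml])
  have ce1: "(Ml x *v e1) $ i = Ml x $ i $ 1" for x i by (simp add: mv2 e1_def)
  have ce2: "(Ml x *v e2) $ i = Ml x $ i $ 2" for x i by (simp add: mv2 e2_def)
  have fac: "\<i> * (cnj (complex_of_real lam) - z) = complex_of_real eps" by (simp add: z_def complex_eq_iff)
  define P where "P t = (\<chi> j. cnj (Ml t $ 1 $ j) * \<Psi> t $ 1 + cnj (Ml t $ 2 $ j) * \<Psi> t $ 2)" for t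
  define W where "W x = (\<chi> j. cnj (Ml x $ 1 $ j) * \<Psi> x $ 1 - cnj (Ml x $ 2 $ j) * \<Psi> x $ 2)" for x
  have idj: "W x $ j = W 0 $ j + complex_of_real eps * integral {0..x} (\<lambda>t. P t $ j)" if x: "0 \<le> x" for x j
  proof -
    have "j = 1 \<or> j = 2" by (rule exhaust_2)
    then show ?thesis
    proof
      assume j: "j = 1"
      show ?thesis using sol_identity[OF \<Psi> c1 x] unfolding fac ce1 by (simp add: W_def P_def j)
    next
      assume j: "j = 2"
      show ?thesis using sol_identity[OF \<Psi> c2 x] unfolding fac ce2 by (simp add: W_def P_def j)
    qed
  qed
  have W01: "W 0 $ 1 = s" and W02: "W 0 $ 2 = -1" by (simp_all add: W_def Ml0 \<Psi>0 mat_def)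
  define r where "r = sqrt (norm s^2 + 1)"
  have nW0: "norm (W 0) = r" by (simp add: norm_vec2 W01 W02 r_def)
  have \<Psi>c: "continuous_on {0..x} \<Psi>" if "0 \<le> x" for x by (rule sol_cont[OF \<Psi> that])
  have Pc: "continuous_on {0..x} P" if x: "0 \<le> x" for x
    unfolding P_def[abs_def] using Mc[OF x] \<Psi>c[OF x] by (intro continuous_intros)
  have PI: "P integrable_on {0..x}" if "0 \<le> x" for x by (rule integrable_continuous_real[OF Pc[OF that]])
  have Wdiff: "W x - W 0 = eps *\<^sub>R integral {0..x} P" if x: "0 \<le> x" for x
  proof -
    have "integral {0..x} (\<lambda>t. P t $ j) = integral {0..x} P $ j" for j
      using integral_linear[OF PI[OF x] bounded_linear_vec_nth, of j] by (simp add: o_def)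
    moreover have "(eps *\<^sub>R integral {0..x} P) $ j = complex_of_real eps * (integral {0..x} P $ j)" for j
      by (subst vector_scaleR_component) (simp add: scaleR_conv_of_real)
    ultimately show ?thesis using idj[OF x] unfolding vec_eq_iff by simp
  qed
  have Pb: "norm (P t) \<le> k * norm (\<Psi> t)" if t: "t \<in> {0..L}" for t
  proof -
    have "norm (P t) \<le> onorm ((*v) (Ml t)) * norm (\<Psi> t)" unfolding P_def by (rule adj_bound)
    also have "\<dots> \<le> k * norm (\<Psi> t)" using onk[OF t] by (intro mult_right_mono) auto
    finally show ?thesis .
  qed
  have Wb: "norm (W x) \<le> k * norm (\<Psi> x)" if x: "x \<in> {0..L}" for x
  proof -
    define y :: "complex^2" where "y = (\<chi> i. if i = 1 then \<Psi> x $ 1 else - (\<Psi> x $ 2))"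
    have "W x = (\<chi> j. cnj (Ml x $ 1 $ j) * y $ 1 + cnj (Ml x $ 2 $ j) * y $ 2)"
      by (simp add: W_def y_def)
    then have "norm (W x) \<le> onorm ((*v) (Ml x)) * norm y" by (simp only: adj_bound)
    also have "norm y = norm (\<Psi> x)" by (simp add: norm_vec2 y_def)
    also have "onorm ((*v) (Ml x)) * norm (\<Psi> x) \<le> k * norm (\<Psi> x)"
      using onk[OF x] by (intro mult_right_mono) auto
    finally show ?thesis .
  qed
  have nI: "(\<lambda>t. norm (\<Psi> t)) integrable_on {0..x}" if "0 \<le> x" for x
    by (intro integrable_continuous_real continuous_intros \<Psi>c that)
  have n2I: "(\<lambda>t. norm (\<Psi> t)^2) integrable_on {0..x}" if "0 \<le> x" for x
    by (intro integrable_continuous_real continuous_intros \<Psi>c that)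
  define G where "G = integral {0..L} (\<lambda>t. norm (\<Psi> t))"
  define I where "I = integral {0..L} (\<lambda>t. norm (\<Psi> t)^2)"
  have G0: "0 \<le> G" unfolding G_def using L0 by (intro integral_nonneg nI) auto
  have I0: "0 \<le> I" unfolding I_def using L0 by (intro integral_nonneg n2I) auto
  have Wdb: "norm (W x - W 0) \<le> eps * k * G" if x: "x \<in> {0..L}" for x
  proof -
    have x0: "0 \<le> x" using x by simp
    have "norm (W x - W 0) = eps * norm (integral {0..x} P)" using Wdiff[OF x0] eps by simp
    also have "norm (integral {0..x} P) \<le> integral {0..x} (\<lambda>t. k * norm (\<Psi> t))"
      using x by (intro integral_norm_bound_integral PI x0 integrable_on_mult_right nI Pb) auto
    also have "\<dots> = k * integral {0..x} (\<lambda>t. norm (\<Psi> t))" by simp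
    also have "integral {0..x} (\<lambda>t. norm (\<Psi> t)) \<le> G"
      unfolding G_def using x L0 by (intro integral_subset_le nI) auto
    finally show ?thesis using eps k0 by (simp add: mult_left_mono)
  qed
  have rpt: "r \<le> k * norm (\<Psi> x) + eps * k * G" if x: "x \<in> {0..L}" for x
  proof -
    have "r = norm (W x - (W x - W 0))" using nW0 by simp
    also have "\<dots> \<le> norm (W x) + norm (W x - W 0)" by (rule norm_triangle_ineq4)
    finally show ?thesis using Wb[OF x] Wdb[OF x] by linarith
  qed
  have CS: "G^2 \<le> L * I"
  proof (cases "G = 0")
    case True then show ?thesis using L0 I0 by simp
  next
    case False
    then have Gp: "0 < G" using G0 by simp
    define \<delta> where "\<delta> = G / L"
    have \<delta>: "0 < \<delta>" using Gp L0 by (simp add: \<delta>_def)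
    have pt: "norm (\<Psi> t) \<le> \<delta> / 2 + norm (\<Psi> t)^2 / (2 * \<delta>)" for t
    proof -
      have "0 \<le> (norm (\<Psi> t) - \<delta>)^2" by simp
      then have "2 * \<delta> * norm (\<Psi> t) \<le> \<delta>^2 + norm (\<Psi> t)^2" by (simp add: power2_eq_square algebra_simps)
      then show ?thesis using \<delta> by (simp add: field_simps power2_eq_square)
    qed
    have "G \<le> integral {0..L} (\<lambda>t. \<delta> / 2 + norm (\<Psi> t)^2 / (2 * \<delta>))"
      unfolding G_def using L0 pt
      by (intro integral_le nI integrable_add integrable_on_divide n2I) auto
    also have "\<dots> = L * (\<delta> / 2) + I / (2 * \<delta>)"
    proof -
      have i2: "(\<lambda>t. norm (\<Psi> t)^2 / (2 * \<delta>)) integrable_on {0..L}"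
        using L0 by (intro integrable_on_divide n2I) auto
      have "integral {0..L} (\<lambda>t. \<delta> / 2 + norm (\<Psi> t)^2 / (2 * \<delta>))
            = integral {0..L} (\<lambda>t. \<delta> / 2) + integral {0..L} (\<lambda>t. norm (\<Psi> t)^2 / (2 * \<delta>))"
        by (rule integral_add[OF _ i2]) auto
      then show ?thesis using L0 by (simp add: I_def)
    qed
    also have "\<dots> = G / 2 + L * I / (2 * G)" using L0 Gp by (simp add: \<delta>_def field_simps)
    finally have "G / 2 \<le> L * I / (2 * G)" by linarith
    then show ?thesis using Gp by (simp add: field_simps power2_eq_square)
  qed
  have pos: "L * (r / k - eps * G)^2 \<le> I" if m: "0 < r / k - eps * G"
  proof -
    have pt: "(r / k - eps * G)^2 \<le> norm (\<Psi> t)^2" if t: "t \<in> {0..L}" for t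
    proof -
      have "k * (r / k - eps * G) \<le> k * norm (\<Psi> t)"
        using rpt[OF t] k0 by (simp add: algebra_simps)
      then have "r / k - eps * G \<le> norm (\<Psi> t)" using k0 by simp
      then show ?thesis using m by (intro power_mono) auto
    qed
    have "integral {0..L} (\<lambda>t. (r / k - eps * G)^2) \<le> I"
      unfolding I_def using L0 by (intro integral_le n2I pt) auto
    then show ?thesis using L0 by simp
  qed
  have I_low: "4/9 * L * r^2 / k^2 \<le> I"
    by (rule core_ineq[OF L0 k0 _ G0 I0 CS eL eps pos]) (simp add: r_def)
  have up: "2 * eps * I \<le> 1 - norm s^2" using \<Psi>b[of L] L0 by (simp add: I_def)
  have r2: "r^2 = norm s^2 + 1" by (simp add: r_def)
  have "2 * eps * (4/9 * L * r^2 / k^2) = 4/9 * (2 * (eps * L)) * r^2 / k^2" by (simp add: algebra_simps)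
  also have "\<dots> = 4/9 * r^2 / K" using eL kK by (simp add: algebra_simps)
  also have "\<dots> = 4/9 * (1 + norm s^2) / K" using r2 by (simp add: add.commute)
  finally have "2 * eps * (4/9 * L * r^2 / k^2) = 4/9 * (1 + norm s^2) / K" .
  moreover have "2 * eps * (4/9 * L * r^2 / k^2) \<le> 2 * eps * I"
    using I_low eps by (intro mult_left_mono) auto
  ultimately have key: "4/9 * (1 + norm s^2) / K \<le> 1 - norm s^2" using up by linarith
  have K0: "0 < K" using K1 by simp
  note fi = final_ineq[OF norm_ge_zero K0 key]
  have num: "norm (1 + \<xi> * s) \<le> 1 + norm s"
    using norm_triangle_ineq[of 1 "\<xi> * s"] xi by (simp add: norm_mult)
  have den: "1 - norm s \<le> norm (1 - \<xi> * s)"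
    using norm_triangle_ineq2[of 1 "\<xi> * s"] xi by (simp add: norm_mult)
  have "norm ((1 + \<xi> * s) / (1 - \<xi> * s)) = norm (1 + \<xi> * s) / norm (1 - \<xi> * s)" by (simp add: norm_divide)
  also have "\<dots> \<le> (1 + norm s) / (1 - norm s)"
    by (rule frac_le) (use num den fi(1) in auto)
  also have "\<dots> \<le> 9/2 * K" by (rule fi(2))
  also have "\<dots> \<le> (3 + sqrt 8) * K"
  proof -
    have "3/2 \<le> sqrt 8" by (rule real_le_rsqrt) (simp add: power2_eq_square)
    then show ?thesis using K0 by (intro mult_right_mono) auto
  qed
  finally show ?thesis unfolding s_def z_def K_def f_def L_def .
qed

end

theorem lemma3p3:
  fixes \<phi> :: "real \<Rightarrow> complex" and \<xi> :: complex and lam \<epsilon> :: real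
  assumes loc: "\<And>x. x \<ge> 0 \<Longrightarrow> \<phi> absolutely_integrable_on {0..x}"
    and unif: "\<exists>C. \<forall>x\<ge>0. integral {x..x+1} (\<lambda>t. norm (\<phi> t)) \<le> C"
    and xi: "norm \<xi> = 1"
    and eps: "\<epsilon> > 0"
  shows "norm ((1 + \<xi> * schur \<phi> (complex_of_real lam + \<i> * complex_of_real \<epsilon>)) /
               (1 - \<xi> * schur \<phi> (complex_of_real lam + \<i> * complex_of_real \<epsilon>)))
         \<le> (3 + sqrt 8) * (SUP x\<in>{0..1/(2*\<epsilon>)}. (onorm (\<lambda>v. transfer \<phi> lam x *v v))\<^sup>2)"
proof -
  interpret dloc \<phi> by standard (rule loc)
  show ?thesis by (rule main_est[OF xi eps])
qed

end
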